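(* There exist absolute constants $C,c>0$ such that for every $r\ge1$ and all functions $P_1,\dots,P_n\colon\mathbb{F}_2^m\to\mathbb{F}_2$ with $\operatorname{rank}_1(P_i)\le r$ for all $i$, the distribution $\mathcal{P}$ of $(P_1(X),\dots,P_n(X))$, $X$ uniform on $\mathbb{F}_2^m$, satisfies \[ \|\mathcal{P}-\mathrm{Ber}(1/3)^{\otimes n}\|_{\mathtt{TV}}\ \ge\ 1-2^{-c\,2^{-Cr^2}n}. \]
   Context: $\operatorname{rank}_1(P)$ is the smallest positive integer $k$ with $P=\Gamma(L_1,\dots,L_k)$ for polynomials $L_j$ of degree at most $1$ and some $\Gamma\colon\mathbb{F}_2^k\to\mathbb{F}_2$. Total variation distance: $\frac12\sum_x|\mathcal{D}_1(x)-\mathcal{D}_2(x)|$. *)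

theory Defs
  imports Complex_Main
begin

text \<open>F_2 is modelled by bool (True = 1); F_2^m by bool lists of length m.\<close>

definition vecs :: "nat \<Rightarrow> bool list set" where
  "vecs m = {xs. length xs = m}"

definition deg_le1 :: "nat \<Rightarrow> (bool list \<Rightarrow> bool) \<Rightarrow> bool" where
  "deg_le1 m L \<longleftrightarrow> (\<exists>(a0::bool) (a::nat \<Rightarrow> bool). \<forall>x \<in> vecs m.
      L x = odd (of_bool a0 + (\<Sum>i<m. of_bool (a i \<and> x ! i)) :: nat))"

definition rank1 :: "nat \<Rightarrow> (bool list \<Rightarrow> bool) \<Rightarrow> nat" where
  "rank1 m P = (LEAST k. 0 < k \<and> (\<exists>(L::nat \<Rightarrow> bool list \<Rightarrow> bool) (\<Gamma>::bool list \<Rightarrow> bool).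
      (\<forall>j<k. deg_le1 m (L j)) \<and> (\<forall>x \<in> vecs m. P x = \<Gamma> (map (\<lambda>j. L j x) [0..<k]))))"

definition distP :: "nat \<Rightarrow> nat \<Rightarrow> (nat \<Rightarrow> bool list \<Rightarrow> bool) \<Rightarrow> bool list \<Rightarrow> real" where
  "distP m n P y = real (card {x \<in> vecs m. map (\<lambda>i. P i x) [0..<n] = y}) / 2 ^ m"

definition ber13 :: "bool list \<Rightarrow> real" where
  "ber13 y = (\<Prod>b\<leftarrow>y. if b then 1/3 else 2/3)"

definition tv_dist :: "bool list set \<Rightarrow> (bool list \<Rightarrow> real) \<Rightarrow> (bool list \<Rightarrow> real) \<Rightarrow> real" where
  "tv_dist S D1 D2 = (1/2) * (\<Sum>y\<in>S. \<bar>D1 y - D2 y\<bar>)"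

end

theory Submission
  imports Defs "HOL-Library.FuncSet"
begin


definition lin :: "nat \<Rightarrow> (nat \<Rightarrow> bool) \<Rightarrow> bool list \<Rightarrow> bool" where
  "lin m a x = odd (\<Sum>i<m. of_bool (a i \<and> x ! i) :: nat)"

definition vx :: "(nat \<Rightarrow> bool) \<Rightarrow> (nat \<Rightarrow> bool) \<Rightarrow> nat \<Rightarrow> bool" where
  "vx a b = (\<lambda>i. a i \<noteq> b i)"

definition par :: "'k set \<Rightarrow> ('k \<Rightarrow> bool) \<Rightarrow> bool" where
  "par R P = odd (card {k\<in>R. P k})"

definition xsum :: "'k set \<Rightarrow> ('k \<Rightarrow> nat \<Rightarrow> bool) \<Rightarrow> nat \<Rightarrow> bool" where
  "xsum R g = (\<lambda>i. par R (\<lambda>k. g k i))"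

definition zm :: "nat \<Rightarrow> (nat \<Rightarrow> bool) \<Rightarrow> bool" where "zm m a = (\<forall>i<m. \<not> a i)"

definition sg :: "bool \<Rightarrow> real" where "sg b = (if b then -1 else 1)"

lemma lin_vx: "lin m (vx a b) x = (lin m a x \<noteq> lin m b x)"
proof -
  have e: "\<And>i. of_bool (vx a b i \<and> x!i) + 2*of_bool(a i \<and> b i \<and> x!i)
     = of_bool (a i \<and> x!i) + (of_bool (b i \<and> x!i)::nat)" by (auto simp: vx_def)
  have "(\<Sum>i<m. of_bool (vx a b i \<and> x!i) + 2*of_bool(a i \<and> b i \<and> x!i) :: nat)
        = (\<Sum>i<m. of_bool (a i \<and> x!i) + of_bool (b i \<and> x!i))"
    using e by (intro sum.cong) auto
  then have "(\<Sum>i<m. of_bool (vx a b i \<and> x!i) :: nat) + 2 * (\<Sum>i<m. of_bool (a i \<and> b i \<and> x!i))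
        = (\<Sum>i<m. of_bool (a i \<and> x!i)) + (\<Sum>i<m. of_bool (b i \<and> x!i))"
    by (simp only: sum.distrib sum_distrib_left)
  moreover have "\<And>p q a b::nat. p + 2*q = a + b \<Longrightarrow> odd p = (odd a \<noteq> odd b)" by presburger
  ultimately show ?thesis unfolding lin_def by blast
qed

lemma par_empty[simp]: "par {} P = False" by (simp add: par_def)

lemma par_insert: "finite R \<Longrightarrow> k \<notin> R \<Longrightarrow> par (insert k R) P = (P k \<noteq> par R P)"
proof -
  assume f: "finite R" and k: "k \<notin> R"
  show ?thesis
  proof (cases "P k")
    case True
    then have "{k'\<in>insert k R. P k'} = insert k {k'\<in>R. P k'}" by auto
    then show ?thesis using f k True by (simp add: par_def)
  next
    case False
    then have "{k'\<in>insert k R. P k'} = {k'\<in>R. P k'}" by auto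
    then show ?thesis using False by (simp add: par_def)
  qed
qed

lemma par_union: "finite A \<Longrightarrow> finite B \<Longrightarrow> A \<inter> B = {} \<Longrightarrow> par (A \<union> B) P = (par A P \<noteq> par B P)"
proof -
  assume fa: "finite A" and fb: "finite B" and d: "A \<inter> B = {}"
  have "{k\<in>A\<union>B. P k} = {k\<in>A. P k} \<union> {k\<in>B. P k}" by auto
  moreover have "card ({k\<in>A. P k} \<union> {k\<in>B. P k}) = card {k\<in>A. P k} + card {k\<in>B. P k}"
    by (rule card_Un_disjoint) (use fa fb d in auto)
  ultimately show ?thesis by (simp add: par_def)
qed

lemma par_cong: "(\<And>k. k \<in> R \<Longrightarrow> P k = Q k) \<Longrightarrow> par R P = par R Q"
  unfolding par_def by (metis (mono_tags, lifting) Collect_cong)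

lemma lin_zero: "lin m (\<lambda>i. False) x = False" by (simp add: lin_def)

lemma lin_zm: "zm m a \<Longrightarrow> lin m a x = False"
  unfolding lin_def zm_def by (simp)

lemma xsum_empty: "xsum {} g = (\<lambda>i. False)" by (simp add: xsum_def)

lemma xsum_insert: "finite R \<Longrightarrow> k \<notin> R \<Longrightarrow> xsum (insert k R) g = vx (g k) (xsum R g)"
  by (simp add: xsum_def vx_def par_insert)

lemma lin_xsum: "finite R \<Longrightarrow> lin m (xsum R g) x = par R (\<lambda>k. lin m (g k) x)"
proof (induction R rule: finite_induct)
  case empty then show ?case by (simp add: xsum_empty lin_zero)
next
  case (insert k R) then show ?case by (simp add: xsum_insert lin_vx par_insert)
qed

lemma sg_neq: "sg (p \<noteq> q) = sg p * sg q" by (simp add: sg_def)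

lemma sg_lin_prod: "sg (lin m a x) = (\<Prod>i<m. sg (a i \<and> x ! i))"
proof (induction m)
  case 0 then show ?case by (simp add: lin_def sg_def)
next
  case (Suc m)
  have l: "lin (Suc m) a x = (lin m a x \<noteq> (a m \<and> x ! m))" unfolding lin_def by auto
  show ?case by (simp only: l sg_neq Suc prod.lessThan_Suc)
qed

lemma finite_vecs[simp]: "finite (vecs m)" unfolding vecs_def using finite_lists_length_eq[of "UNIV::bool set" m] by simp

lemma card_vecs: "card (vecs m) = 2 ^ m" unfolding vecs_def
  using card_lists_length_eq[of "UNIV::bool set" m] by simp

lemma vecs_Suc: "vecs (Suc m) = (\<lambda>(xs,b). xs @ [b]) ` (vecs m \<times> UNIV)"
proof
  show "vecs (Suc m) \<subseteq> (\<lambda>(xs,b). xs @ [b]) ` (vecs m \<times> UNIV)"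
  proof
    fix y assume "y \<in> vecs (Suc m)"
    then have l: "length y = Suc m" by (simp add: vecs_def)
    then have "y = butlast y @ [last y]" by (metis append_butlast_last_id list.size(3) nat.simps(3))
    moreover have "butlast y \<in> vecs m" using l by (simp add: vecs_def)
    ultimately show "y \<in> (\<lambda>(xs,b). xs @ [b]) ` (vecs m \<times> UNIV)" by force
  qed
qed (auto simp: vecs_def)

lemma sum_vecs_prod:
  fixes h :: "nat \<Rightarrow> bool \<Rightarrow> 'c::comm_semiring_1"
  shows "(\<Sum>x\<in>vecs m. \<Prod>i<m. h i (x ! i)) = (\<Prod>i<m. h i True + h i False)"
proof (induction m)
  case 0
  have "vecs 0 = {[]}" by (auto simp: vecs_def)
  then show ?case by simp
next
  case (Suc m)
  have inj: "inj_on (\<lambda>(xs,b). xs @ [b]) (vecs m \<times> (UNIV::bool set))" by (auto simp: inj_on_def)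
  have "(\<Sum>x\<in>vecs (Suc m). \<Prod>i<Suc m. h i (x ! i))
      = (\<Sum>p\<in>vecs m \<times> UNIV. \<Prod>i<Suc m. h i ((fst p @ [snd p]) ! i))"
    unfolding vecs_Suc by (subst sum.reindex[OF inj]) (simp add: case_prod_beta)
  also have "\<dots> = (\<Sum>p\<in>vecs m \<times> UNIV. (\<Prod>i<m. h i (fst p ! i)) * h m (snd p))"
  proof (rule sum.cong[OF refl])
    fix p assume "p \<in> vecs m \<times> (UNIV::bool set)"
    then have l: "length (fst p) = m" by (auto simp: vecs_def)
    have "(\<Prod>i<m. h i ((fst p @ [snd p]) ! i)) = (\<Prod>i<m. h i (fst p ! i))"
      by (rule prod.cong) (auto simp: l nth_append)
    moreover have "(fst p @ [snd p]) ! m = snd p" using l by (metis nth_append_length)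
    ultimately show "(\<Prod>i<Suc m. h i ((fst p @ [snd p]) ! i)) = (\<Prod>i<m. h i (fst p ! i)) * h m (snd p)"
      by simp
  qed
  also have "\<dots> = (\<Sum>xs\<in>vecs m. \<Sum>b\<in>UNIV. (\<Prod>i<m. h i (xs ! i)) * h m b)"
    by (simp add: sum.cartesian_product case_prod_beta)
  also have "\<dots> = (\<Sum>xs\<in>vecs m. (\<Prod>i<m. h i (xs ! i))) * (h m True + h m False)"
    by (simp add: UNIV_bool sum_distrib_left sum_distrib_right algebra_simps)
  finally show ?case using Suc by simp
qed

lemma char_sum: assumes "\<not> zm m a" shows "(\<Sum>x\<in>vecs m. sg (lin m a x)) = 0"
proof -
  have "(\<Sum>x\<in>vecs m. sg (lin m a x)) = (\<Sum>x\<in>vecs m. \<Prod>i<m. (\<lambda>i b. sg (a i \<and> b)) i (x ! i))"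
    by (simp add: sg_lin_prod)
  also have "\<dots> = (\<Prod>i<m. sg (a i \<and> True) + sg (a i \<and> False))" by (rule sum_vecs_prod)
  also have "\<dots> = 0"
  proof -
    obtain i where "i < m" "a i" using assms by (auto simp: zm_def)
    then show ?thesis by (intro prod_zero) (auto simp: sg_def)
  qed
  finally show ?thesis .
qed



definition Aset :: "nat \<Rightarrow> (nat \<Rightarrow> bool) set \<Rightarrow> ((nat \<Rightarrow> bool) \<Rightarrow> bool) \<Rightarrow> bool list set" where
  "Aset m U c = {x\<in>vecs m. \<forall>u\<in>U. lin m u x = c u}"

definition indep :: "nat \<Rightarrow> (nat \<Rightarrow> bool) set \<Rightarrow> 'k set \<Rightarrow> ('k \<Rightarrow> nat \<Rightarrow> bool) \<Rightarrow> bool" where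
  "indep m U K g = (\<forall>T\<subseteq>U. \<forall>R\<subseteq>K. R \<noteq> {} \<longrightarrow> \<not> zm m (vx (xsum T (\<lambda>u. u)) (xsum R g)))"

lemma sg_par: "finite T \<Longrightarrow> sg (par T P) = (\<Prod>k\<in>T. sg (P k))"
proof (induction T rule: finite_induct)
  case empty then show ?case by (simp add: sg_def)
next
  case (insert x F)
  have "sg (par (insert x F) P) = sg (P x \<noteq> par F P)" by (simp only: par_insert[OF insert(1) insert(2)])
  also have "\<dots> = sg (P x) * sg (par F P)" by (rule sg_neq)
  finally show ?case using insert by simp
qed

lemma sg_neq2: "sg (p = (\<not> q)) = sg p * sg q" by (simp add: sg_def)

lemma of_bool_ball: "finite K \<Longrightarrow> (of_bool (\<forall>k\<in>K. P k) :: real) = (\<Prod>k\<in>K. of_bool (P k))"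
  by (induction K rule: finite_induct) auto

lemma ind_expand:
  assumes "finite K"
  shows "(of_bool (\<forall>k\<in>K. lin m (g k) x = w k) :: real)
       = (1/2)^card K * (\<Sum>R\<in>Pow K. (\<Prod>k\<in>R. sg (w k)) * sg (lin m (xsum R g) x))"
proof -
  have "(of_bool (\<forall>k\<in>K. lin m (g k) x = w k) :: real) = (\<Prod>k\<in>K. of_bool (lin m (g k) x = w k))"
    using assms by (rule of_bool_ball)
  also have "\<dots> = (\<Prod>k\<in>K. (1/2) * (sg (w k) * sg (lin m (g k) x) + 1))"
    by (rule prod.cong) (auto simp: sg_def)
  also have "\<dots> = (1/2)^card K * (\<Prod>k\<in>K. sg (w k) * sg (lin m (g k) x) + 1)"
    by (simp only: prod.distrib prod_constant)
  also have "(\<Prod>k\<in>K. sg (w k) * sg (lin m (g k) x) + 1)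
     = (\<Sum>R\<in>Pow K. (\<Prod>k\<in>R. sg (w k) * sg (lin m (g k) x)) * (\<Prod>k\<in>K-R. 1))"
    using assms by (rule prod_add)
  also have "\<dots> = (\<Sum>R\<in>Pow K. (\<Prod>k\<in>R. sg (w k)) * sg (lin m (xsum R g) x))"
  proof (rule sum.cong[OF refl])
    fix R assume "R \<in> Pow K"
    then have fR: "finite R" using assms finite_subset by auto
    show "(\<Prod>k\<in>R. sg (w k) * sg (lin m (g k) x)) * (\<Prod>k\<in>K-R. 1) = (\<Prod>k\<in>R. sg (w k)) * sg (lin m (xsum R g) x)"
      using fR by (simp add: prod.distrib lin_xsum sg_par)
  qed
  finally show ?thesis .
qed

lemma card_as_sum: "S \<subseteq> vecs m \<Longrightarrow> real (card S) = (\<Sum>x\<in>vecs m. of_bool (x \<in> S))"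
proof -
  assume "S \<subseteq> vecs m"
  then have "(\<Sum>x\<in>vecs m. (of_bool (x \<in> S)::real)) = (\<Sum>x\<in>S. 1)"
    by (simp add: sum.If_cases Int_absorb1 of_bool_def)
  then show ?thesis by simp
qed

lemma count_formula:
  assumes fU: "finite U" and fK: "finite K" and ind: "indep m U K g"
  shows "real (card {x\<in>Aset m U c. \<forall>k\<in>K. lin m (g k) x = w k})
    = (1/2)^(card U + card K) * (\<Sum>T\<in>Pow U. (\<Prod>u\<in>T. sg (c u)) * (\<Sum>x\<in>vecs m. sg (lin m (xsum T (\<lambda>u. u)) x)))"
proof -
  define sT where "sT T = (\<Prod>u\<in>T. sg (c u))" for T
  define sR where "sR R = (\<Prod>k\<in>R. sg (w k))" for R
  have "real (card {x\<in>Aset m U c. \<forall>k\<in>K. lin m (g k) x = w k})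
     = (\<Sum>x\<in>vecs m. of_bool (x \<in> {x\<in>Aset m U c. \<forall>k\<in>K. lin m (g k) x = w k}))"
    by (rule card_as_sum) (auto simp: Aset_def)
  also have "\<dots> = (\<Sum>x\<in>vecs m. of_bool (\<forall>u\<in>U. lin m ((\<lambda>u. u) u) x = c u) * of_bool (\<forall>k\<in>K. lin m (g k) x = w k))"
    by (rule sum.cong[OF refl]) (auto simp: Aset_def)
  also have "\<dots> = (\<Sum>x\<in>vecs m. ((1/2)^card U * (\<Sum>T\<in>Pow U. sT T * sg (lin m (xsum T (\<lambda>u. u)) x)))
       * ((1/2)^card K * (\<Sum>R\<in>Pow K. sR R * sg (lin m (xsum R g) x))))"
    unfolding sT_def sR_def by (simp only: ind_expand[OF fU] ind_expand[OF fK])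
  also have "\<dots> = (1/2)^(card U + card K) * (\<Sum>T\<in>Pow U. \<Sum>R\<in>Pow K. sT T * sR R *
        (\<Sum>x\<in>vecs m. sg (lin m (vx (xsum T (\<lambda>u. u)) (xsum R g)) x)))"
  proof -
    have e: "((1/2)^card U * (\<Sum>T\<in>Pow U. sT T * sg (lin m (xsum T (\<lambda>u. u)) x)))
       * ((1/2)^card K * (\<Sum>R\<in>Pow K. sR R * sg (lin m (xsum R g) x)))
       = (1/2)^(card U + card K) * (\<Sum>T\<in>Pow U. \<Sum>R\<in>Pow K. sT T * sR R *
          sg (lin m (vx (xsum T (\<lambda>u. u)) (xsum R g)) x))" for x
    proof -
      have e1: "(\<Sum>T\<in>Pow U. sT T * sg (lin m (xsum T (\<lambda>u. u)) x)) * (\<Sum>R\<in>Pow K. sR R * sg (lin m (xsum R g) x))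
        = (\<Sum>T\<in>Pow U. \<Sum>R\<in>Pow K. sT T * sR R * sg (lin m (vx (xsum T (\<lambda>u. u)) (xsum R g)) x))"
        unfolding sum_product by (intro sum.cong refl) (simp add: lin_vx sg_neq2 mult_ac)
      show ?thesis by (subst e1[symmetric]) (simp add: power_add mult_ac)
    qed
    have "(\<Sum>x\<in>vecs m. \<Sum>T\<in>Pow U. \<Sum>R\<in>Pow K. sT T * sR R *
          sg (lin m (vx (xsum T (\<lambda>u. u)) (xsum R g)) x))
        = (\<Sum>T\<in>Pow U. \<Sum>x\<in>vecs m. \<Sum>R\<in>Pow K. sT T * sR R *
          sg (lin m (vx (xsum T (\<lambda>u. u)) (xsum R g)) x))" by (rule sum.swap)
    also have "\<dots> = (\<Sum>T\<in>Pow U. \<Sum>R\<in>Pow K. \<Sum>x\<in>vecs m. sT T * sR R *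
          sg (lin m (vx (xsum T (\<lambda>u. u)) (xsum R g)) x))" by (rule sum.cong[OF refl], rule sum.swap)
    also have "\<dots> = (\<Sum>T\<in>Pow U. \<Sum>R\<in>Pow K. sT T * sR R *
        (\<Sum>x\<in>vecs m. sg (lin m (vx (xsum T (\<lambda>u. u)) (xsum R g)) x)))" by (simp add: sum_distrib_left)
    finally show ?thesis by (simp add: e sum_distrib_left[symmetric])
  qed
  also have "\<dots> = (1/2)^(card U + card K) * (\<Sum>T\<in>Pow U. sT T * (\<Sum>x\<in>vecs m. sg (lin m (xsum T (\<lambda>u. u)) x)))"
  proof -
    have "(\<Sum>R\<in>Pow K. sT T * sR R * (\<Sum>x\<in>vecs m. sg (lin m (vx (xsum T (\<lambda>u. u)) (xsum R g)) x)))
        = sT T * (\<Sum>x\<in>vecs m. sg (lin m (xsum T (\<lambda>u. u)) x))" if T: "T \<in> Pow U" for T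
    proof -
      have "(\<Sum>R\<in>Pow K. sT T * sR R * (\<Sum>x\<in>vecs m. sg (lin m (vx (xsum T (\<lambda>u. u)) (xsum R g)) x)))
          = (\<Sum>R\<in>{{}}. sT T * sR R * (\<Sum>x\<in>vecs m. sg (lin m (vx (xsum T (\<lambda>u. u)) (xsum R g)) x)))"
      proof (rule sum.mono_neutral_right)
        show "finite (Pow K)" using fK by simp
        show "{{}} \<subseteq> Pow K" by simp
        show "\<forall>R\<in>Pow K - {{}}. sT T * sR R * (\<Sum>x\<in>vecs m. sg (lin m (vx (xsum T (\<lambda>u. u)) (xsum R g)) x)) = 0"
        proof
          fix R assume "R \<in> Pow K - {{}}"
          then have "R \<subseteq> K" "R \<noteq> {}" by auto
          then have "\<not> zm m (vx (xsum T (\<lambda>u. u)) (xsum R g))" using ind T unfolding indep_def by auto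
          then show "sT T * sR R * (\<Sum>x\<in>vecs m. sg (lin m (vx (xsum T (\<lambda>u. u)) (xsum R g)) x)) = 0"
            by (simp add: char_sum)
        qed
      qed
      also have "\<dots> = sT T * (\<Sum>x\<in>vecs m. sg (lin m (xsum T (\<lambda>u. u)) x))"
        by (simp add: sR_def xsum_empty lin_vx lin_zero)
      finally show ?thesis .
    qed
    then show ?thesis by simp
  qed
  finally show ?thesis unfolding sT_def .
qed

lemma uniform:
  assumes fU: "finite U" and fK: "finite K" and ind: "indep m U K g"
  shows "real (card {x\<in>Aset m U c. \<forall>k\<in>K. lin m (g k) x = w k}) * 2 ^ card K = real (card (Aset m U c))"
proof -
  have ind0: "indep m U ({}::'a set) g" by (simp add: indep_def)
  have "real (card (Aset m U c)) = real (card {x\<in>Aset m U c. \<forall>k\<in>({}::'a set). lin m (g k) x = w k})" by simp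
  also have "\<dots> = (1/2)^(card U) * (\<Sum>T\<in>Pow U. (\<Prod>u\<in>T. sg (c u)) * (\<Sum>x\<in>vecs m. sg (lin m (xsum T (\<lambda>u. u)) x)))"
    using count_formula[OF fU _ ind0, of c w] by simp
  finally have a: "real (card (Aset m U c)) * 2^card U = (\<Sum>T\<in>Pow U. (\<Prod>u\<in>T. sg (c u)) * (\<Sum>x\<in>vecs m. sg (lin m (xsum T (\<lambda>u. u)) x)))"
    by (simp add: field_simps)
  have b: "real (card {x\<in>Aset m U c. \<forall>k\<in>K. lin m (g k) x = w k}) * 2 ^ card K * 2^card U = (\<Sum>T\<in>Pow U. (\<Prod>u\<in>T. sg (c u)) * (\<Sum>x\<in>vecs m. sg (lin m (xsum T (\<lambda>u. u)) x)))"
    using count_formula[OF fU fK ind, of c w] by (simp add: power_add field_simps)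
  from a b have "real (card {x\<in>Aset m U c. \<forall>k\<in>K. lin m (g k) x = w k}) * 2 ^ card K * 2^card U = real (card (Aset m U c)) * 2^card U"
    by simp
  then show ?thesis by simp
qed



lemma two_pow_mod3: "(2::nat)^k mod 3 = 1 \<or> (2::nat)^k mod 3 = 2"
proof (induction k)
  case 0 then show ?case by simp
next
  case (Suc k)
  have "(2::nat)^Suc k mod 3 = (2 * (2^k mod 3)) mod 3" by (simp add: mod_mult_right_eq)
  then show ?case using Suc by auto
qed

lemma bc_sqrt:
  fixes p q :: real
  assumes "0 \<le> p" "p \<le> 1" "0 \<le> q" "q \<le> 1"
  shows "sqrt (p*q) + sqrt ((1-p)*(1-q)) \<le> 1 - (p-q)^2/8"
proof -
  define s t u v where "s = sqrt p" "t = sqrt q" "u = sqrt (1-p)" "v = sqrt (1-q)"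
  have s2: "s^2 = p" and t2: "t^2 = q" and u2: "u^2 = 1-p" and v2: "v^2 = 1-q"
    using assms by (auto simp: s_t_u_v_def)
  have sn: "0 \<le> s" "s \<le> 1" and tn: "0 \<le> t" "t \<le> 1" and "0 \<le> u" "0 \<le> v"
    using assms by (auto simp: s_t_u_v_def)
  have lhs: "sqrt (p*q) + sqrt ((1-p)*(1-q)) = s*t + u*v"
    by (simp add: s_t_u_v_def real_sqrt_mult)
  have e: "s*t + u*v = 1 - ((s-t)^2 + (u-v)^2)/2"
    using s2 t2 u2 v2 by (simp add: power2_eq_square field_simps)
  have "(p-q)^2 = (s-t)^2 * (s+t)^2" using s2 t2 by (simp add: power2_eq_square algebra_simps)
  also have "\<dots> \<le> (s-t)^2 * 4"
  proof (rule mult_left_mono)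
    have "s + t \<le> 2" using sn tn by simp
    then have "(s+t)^2 \<le> 2^2" using sn tn by (intro power_mono) auto
    then show "(s+t)^2 \<le> 4" by simp
  qed simp
  finally have "(p-q)^2/8 \<le> (s-t)^2/2" by simp
  moreover have "0 \<le> (u-v)^2" by simp
  moreover have "((s-t)^2 + (u-v)^2)/2 = (s-t)^2/2 + (u-v)^2/2" by (simp add: add_divide_distrib)
  ultimately show ?thesis using lhs e by linarith
qed

lemma bc_dyadic:
  fixes a k r :: nat
  assumes "a \<le> 2^k" "k \<le> r"
  shows "sqrt ((real a / 2^k) * (1/3)) + sqrt ((1 - real a / 2^k) * (2/3)) \<le> 1 - 1/2^(2*r+7)"
proof -
  define p where "p = real a / 2^k"
  have p0: "0 \<le> p" and p1: "p \<le> 1" using assms by (auto simp: p_def divide_le_eq_1)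
  have "sqrt (p*(1/3)) + sqrt ((1-p)*(1-1/3)) \<le> 1 - (p-1/3)^2/8"
    by (rule bc_sqrt) (use p0 p1 in auto)
  moreover have "1/2^(2*r+7) \<le> (p-1/3)^2/8"
  proof -
    have ne: "int (3*a) \<noteq> int (2^k)" using two_pow_mod3[of k] by (metis mod_mult_self1_is_0 of_nat_eq_iff zero_neq_one zero_neq_numeral)
    then have "int (3*a) - int (2^k) \<noteq> 0" by simp
    then have "0 < (int (3*a) - int (2^k))^2" by simp
    then have "1 \<le> (int (3*a) - int (2^k))^2" using int_one_le_iff_zero_less by blast
    then have h1: "1 \<le> (3 * real a - 2^k)^2"
      by (metis (mono_tags, opaque_lifting) of_int_1 of_int_diff of_int_le_iff of_int_of_nat_eq of_int_power of_nat_mult of_nat_numeral of_nat_power)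
    have "(p - 1/3)^2 = (3 * real a - 2^k)^2 / (9 * 4^k)"
      by (simp add: p_def field_simps power2_eq_square power_mult_distrib[symmetric])
    also have "\<dots> \<ge> 1 / (9 * 4^k)" using h1 by (simp add: divide_right_mono)
    finally have "1/(72 * 4^k) \<le> (p-1/3)^2/8" by simp
    moreover have "1/2^(2*r+7) \<le> 1/(72 * (4::real)^k)"
    proof -
      have "(72::real) * 4^k \<le> 2^(2*r+7)"
      proof -
        have "(4::real)^k = 2^(2*k)" by (simp add: power_mult)
        have "(2::real)^(2*k) \<le> 2^(2*r)" by (rule power_increasing) (use assms in auto)
        then have "(72::real) * 2^(2*k) \<le> 128 * 2^(2*r)" by (intro mult_mono) auto
        then show ?thesis by (simp add: power_add \<open>(4::real)^k = 2^(2*k)\<close> mult.commute)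
      qed
      then show ?thesis by (intro divide_left_mono) auto
    qed
    ultimately show ?thesis by linarith
  qed
  ultimately show ?thesis by (simp add: p_def)
qed



definition qb :: "bool \<Rightarrow> real" where "qb b = (if b then 1/3 else 2/3)"

definition Fv :: "nat \<Rightarrow> (nat \<Rightarrow> bool list \<Rightarrow> bool) \<Rightarrow> bool list \<Rightarrow> bool list" where
  "Fv n P x = map (\<lambda>i. P i x) [0..<n]"

definition Phi :: "nat \<Rightarrow> (nat\<Rightarrow>bool) set \<Rightarrow> ((nat\<Rightarrow>bool)\<Rightarrow>bool) \<Rightarrow> nat \<Rightarrow> (nat \<Rightarrow> bool list \<Rightarrow> bool) \<Rightarrow> real" where
  "Phi m U c n P = (\<Sum>y\<in>vecs n. min (real (card {x\<in>Aset m U c. Fv n P x = y}) / real (card (Aset m U c))) (ber13 y))"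

lemma ber13_prod: "length y = n \<Longrightarrow> ber13 y = (\<Prod>i<n. qb (y!i))"
proof (induction y arbitrary: n)
  case Nil then show ?case by (simp add: ber13_def)
next
  case (Cons b y)
  then obtain n' where n: "n = Suc n'" "length y = n'" by auto
  have "ber13 (b # y) = qb b * ber13 y" by (simp add: ber13_def qb_def)
  also have "\<dots> = (\<Prod>i<n. qb ((b#y)!i))" using Cons.IH[OF n(2)]
    unfolding n(1) prod.lessThan_Suc_shift by simp
  finally show ?case .
qed

lemma ber13_nonneg: "0 \<le> ber13 y"
  unfolding ber13_def by (induction y) auto

lemma sum_ber13: "(\<Sum>y\<in>vecs n. ber13 y) = 1"
proof -
  have "(\<Sum>y\<in>vecs n. ber13 y) = (\<Sum>y\<in>vecs n. \<Prod>i<n. (\<lambda>i. qb) i (y!i))"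
    by (rule sum.cong) (auto simp: vecs_def ber13_prod)
  also have "\<dots> = (\<Prod>i<n. qb True + qb False)" by (rule sum_vecs_prod)
  finally show ?thesis by (simp add: qb_def)
qed

lemma ber13_le: "y \<in> vecs n \<Longrightarrow> ber13 y \<le> (2/3)^n"
proof -
  assume "y \<in> vecs n"
  then have "ber13 y = (\<Prod>i<n. qb (y!i))" by (simp add: vecs_def ber13_prod)
  also have "\<dots> \<le> (\<Prod>i<n. 2/3)" by (rule prod_mono) (auto simp: qb_def)
  finally show ?thesis by simp
qed

lemma restrict_eq_iff: "z \<in> PiE S (\<lambda>_. UNIV) \<Longrightarrow> (restrict f S = z) = (\<forall>i\<in>S. f i = z i)"
  by (auto simp: PiE_def extensional_def restrict_def fun_eq_iff)

lemma ber_marg: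
  assumes S: "S \<subseteq> {..<n}" and z: "z \<in> PiE S (\<lambda>_. UNIV)"
  shows "(\<Sum>y\<in>{y\<in>vecs n. restrict (\<lambda>i. y!i) S = z}. ber13 y) = (\<Prod>i\<in>S. qb (z i))"
proof -
  define h where "h i b = qb b * (if i \<in> S then of_bool (b = z i) else 1)" for i b
  have fS: "finite S" using S finite_subset by blast
  have "(\<Sum>y\<in>{y\<in>vecs n. restrict (\<lambda>i. y!i) S = z}. ber13 y)
      = (\<Sum>y\<in>vecs n. of_bool (restrict (\<lambda>i. y!i) S = z) * ber13 y)"
    by (subst sum.inter_filter) (auto simp: of_bool_def intro!: sum.cong)
  also have "\<dots> = (\<Sum>y\<in>vecs n. \<Prod>i<n. h i (y!i))"
  proof (rule sum.cong[OF refl])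
    fix y assume y: "y \<in> vecs n"
    have "(\<Prod>i<n. h i (y!i)) = (\<Prod>i<n. qb (y!i)) * (\<Prod>i<n. if i \<in> S then of_bool (y!i = z i) else 1)"
      by (simp add: h_def prod.distrib)
    also have "(\<Prod>i<n. if i \<in> S then (of_bool (y!i = z i)::real) else 1) = (\<Prod>i\<in>{..<n} \<inter> S. of_bool (y!i = z i))"
      by (rule prod.inter_restrict[symmetric]) simp
    also have "{..<n} \<inter> S = S" using S by auto
    also have "(\<Prod>i\<in>S. (of_bool (y!i = z i)::real)) = of_bool (\<forall>i\<in>S. y!i = z i)"
      by (rule of_bool_ball[OF fS, symmetric])
    finally show "of_bool (restrict (\<lambda>i. y!i) S = z) * ber13 y = (\<Prod>i<n. h i (y!i))"
      using y by (simp add: restrict_eq_iff[OF z] ber13_prod vecs_def mult.commute)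
  qed
  also have "\<dots> = (\<Prod>i<n. h i True + h i False)" by (rule sum_vecs_prod)
  also have "\<dots> = (\<Prod>i<n. if i \<in> S then qb (z i) else 1)"
    by (rule prod.cong) (auto simp: h_def qb_def)
  also have "\<dots> = (\<Prod>i\<in>{..<n} \<inter> S. qb (z i))" by (rule prod.inter_restrict[symmetric]) simp
  also have "{..<n} \<inter> S = S" using S by auto
  finally show ?thesis .
qed

lemma min_sum_le:
  fixes a :: "'i \<Rightarrow> real"
  assumes "finite I" "\<And>i. i \<in> I \<Longrightarrow> 0 \<le> a i" "0 \<le> q"
  shows "min (\<Sum>i\<in>I. a i) q \<le> (\<Sum>i\<in>I. min (a i) q)"
  using assms
proof (induction I rule: finite_induct)
  case empty then show ?case by simp
next
  case (insert i I)
  have "0 \<le> (\<Sum>i\<in>I. a i)" using insert by (intro sum_nonneg) auto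
  have "0 \<le> a i" using insert by auto
  have "min (a i + (\<Sum>i\<in>I. a i)) q \<le> min (a i) q + min (\<Sum>i\<in>I. a i) q"
    using \<open>0 \<le> (\<Sum>i\<in>I. a i)\<close> \<open>0 \<le> a i\<close> insert.prems(2) by (auto simp: min_def)
  also have "\<dots> \<le> min (a i) q + (\<Sum>i\<in>I. min (a i) q)" using insert by simp
  finally show ?case using insert by simp
qed

lemma group_min:
  fixes f g :: "'y \<Rightarrow> real"
  assumes "finite Y" "finite Z" "p ` Y \<subseteq> Z"
  shows "(\<Sum>y\<in>Y. min (f y) (g y)) \<le> (\<Sum>z\<in>Z. min (\<Sum>y\<in>{y\<in>Y. p y = z}. f y) (\<Sum>y\<in>{y\<in>Y. p y = z}. g y))"
proof -
  have "(\<Sum>y\<in>Y. min (f y) (g y)) = (\<Sum>z\<in>Z. \<Sum>y\<in>{y\<in>Y. p y = z}. min (f y) (g y))"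
    by (rule sum.group[symmetric]) (use assms in auto)
  also have "\<dots> \<le> (\<Sum>z\<in>Z. min (\<Sum>y\<in>{y\<in>Y. p y = z}. f y) (\<Sum>y\<in>{y\<in>Y. p y = z}. g y))"
  proof (rule sum_mono)
    fix z
    have "(\<Sum>y\<in>{y\<in>Y. p y = z}. min (f y) (g y)) \<le> (\<Sum>y\<in>{y\<in>Y. p y = z}. f y)" by (rule sum_mono) simp
    moreover have "(\<Sum>y\<in>{y\<in>Y. p y = z}. min (f y) (g y)) \<le> (\<Sum>y\<in>{y\<in>Y. p y = z}. g y)" by (rule sum_mono) simp
    ultimately show "(\<Sum>y\<in>{y\<in>Y. p y = z}. min (f y) (g y)) \<le> min (\<Sum>y\<in>{y\<in>Y. p y = z}. f y) (\<Sum>y\<in>{y\<in>Y. p y = z}. g y)"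
      by simp
  qed
  finally show ?thesis .
qed

lemma Fv_in: "Fv n P x \<in> vecs n" by (simp add: Fv_def vecs_def)

lemma card_fibers: "finite X \<Longrightarrow> F ` X \<subseteq> Y \<Longrightarrow> finite Y \<Longrightarrow>
   (\<Sum>y\<in>Y. real (card {x\<in>X. F x = y})) = real (card X)"
proof -
  assume a: "finite X" "F ` X \<subseteq> Y" "finite Y"
  have "(\<Sum>y\<in>Y. (\<Sum>x\<in>{x\<in>X. F x = y}. (1::real))) = (\<Sum>x\<in>X. 1)"
    by (rule sum.group) (use a in auto)
  then show ?thesis by simp
qed

lemma Aset_empty: "Aset m {} c = vecs m" by (simp add: Aset_def)

lemma tv_eq: "tv_dist (vecs n) (distP m n P) ber13 = 1 - Phi m {} c n P"
proof -
  have dP: "distP m n P y = real (card {x\<in>Aset m {} c. Fv n P x = y}) / real (card (Aset m {} c))" for y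
    by (simp add: distP_def Aset_empty card_vecs Fv_def)
  have s1: "(\<Sum>y\<in>vecs n. distP m n P y) = 1"
  proof -
    have "(\<Sum>y\<in>vecs n. distP m n P y) = (\<Sum>y\<in>vecs n. real (card {x\<in>vecs m. Fv n P x = y})) / 2^m"
      by (simp add: distP_def Fv_def sum_divide_distrib)
    also have "\<dots> = real (card (vecs m)) / 2^m" by (subst card_fibers) (auto simp: Fv_in)
    finally show ?thesis by (simp add: card_vecs)
  qed
  have "\<bar>a - b\<bar> = a + b - 2 * min a b" for a b :: real by (simp add: min_def)
  then have "tv_dist (vecs n) (distP m n P) ber13 = (1/2) * ((\<Sum>y\<in>vecs n. distP m n P y) + (\<Sum>y\<in>vecs n. ber13 y)
     - 2 * (\<Sum>y\<in>vecs n. min (distP m n P y) (ber13 y)))"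
    by (simp add: tv_dist_def sum.distrib sum_subtractf sum_distrib_left)
  also have "\<dots> = 1 - (\<Sum>y\<in>vecs n. min (distP m n P y) (ber13 y))" using s1 sum_ber13 by simp
  finally show ?thesis by (simp add: Phi_def dP)
qed



definition ext :: "nat set \<Rightarrow> (nat \<Rightarrow> bool) \<Rightarrow> nat \<Rightarrow> bool" where
  "ext J v = (\<lambda>j. if j \<in> J then v j else False)"

definition Bset :: "nat set \<Rightarrow> ((nat \<Rightarrow> bool) \<Rightarrow> bool) \<Rightarrow> bool \<Rightarrow> (nat \<Rightarrow> bool) set" where
  "Bset J G b = {v\<in>PiE J (\<lambda>_. UNIV). G (ext J v) = b}"

lemma curry_card:
  fixes S :: "nat set" and J :: "nat \<Rightarrow> nat set" and G :: "nat \<Rightarrow> (nat \<Rightarrow> bool) \<Rightarrow> bool"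
  assumes fS: "finite S" and fJ: "\<And>i. i \<in> S \<Longrightarrow> finite (J i)"
  shows "card {w\<in>PiE (Sigma S J) (\<lambda>_. UNIV). \<forall>i\<in>S. G i (ext (J i) (\<lambda>j. w (i,j))) = z i}
       = (\<Prod>i\<in>S. card (Bset (J i) (G i) (z i)))"
proof -
  define W where "W = {w\<in>PiE (Sigma S J) (\<lambda>_. UNIV). \<forall>i\<in>S. G i (ext (J i) (\<lambda>j. w (i,j))) = z i}"
  define cur where "cur w = (\<lambda>i\<in>S. \<lambda>j\<in>J i. w (i,j))" for w :: "nat \<times> nat \<Rightarrow> bool"
  have extc: "ext (J i) (cur w i) = ext (J i) (\<lambda>j. w (i,j))" if "i \<in> S" for w i
    using that by (auto simp: ext_def cur_def)
  have inj: "inj_on cur W"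
  proof
    fix w1 w2 assume w: "w1 \<in> W" "w2 \<in> W" and eq: "cur w1 = cur w2"
    show "w1 = w2"
    proof
      fix k
      show "w1 k = w2 k"
      proof (cases "k \<in> Sigma S J")
        case True
        then obtain i j where k: "k = (i,j)" "i \<in> S" "j \<in> J i" by auto
        have "cur w1 i j = cur w2 i j" using eq by simp
        then show ?thesis using k by (simp add: cur_def)
      next
        case False
        have "w1 \<in> extensional (Sigma S J)" "w2 \<in> extensional (Sigma S J)" using w unfolding W_def PiE_def by auto
        then have "w1 k = undefined" "w2 k = undefined" using False extensional_arb by metis+
        then show ?thesis by simp
      qed
    qed
  qed
  have img: "cur ` W = PiE S (\<lambda>i. Bset (J i) (G i) (z i))"
  proof
    show "cur ` W \<subseteq> PiE S (\<lambda>i. Bset (J i) (G i) (z i))"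
    proof
      fix h assume "h \<in> cur ` W"
      then obtain w where w: "w \<in> W" "h = cur w" by auto
      show "h \<in> PiE S (\<lambda>i. Bset (J i) (G i) (z i))"
        unfolding PiE_iff
      proof
        show "\<forall>i\<in>S. h i \<in> Bset (J i) (G i) (z i)"
          using w extc by (auto simp: Bset_def cur_def W_def)
        show "h \<in> extensional S" using w by (simp add: cur_def)
      qed
    qed
  next
    show "PiE S (\<lambda>i. Bset (J i) (G i) (z i)) \<subseteq> cur ` W"
    proof
      fix h assume h: "h \<in> PiE S (\<lambda>i. Bset (J i) (G i) (z i))"
      define w where "w = (\<lambda>k\<in>Sigma S J. h (fst k) (snd k))"
      have hi: "h i \<in> PiE (J i) (\<lambda>_. UNIV)" "G i (ext (J i) (h i)) = z i" if "i \<in> S" for i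
        using h that by (auto simp: Bset_def)
      have "cur w = h"
      proof
        fix i show "cur w i = h i"
        proof (cases "i \<in> S")
          case True
          have "(\<lambda>j\<in>J i. w (i,j)) = (\<lambda>j\<in>J i. h i j)" using True by (auto simp: w_def)
          also have "\<dots> = h i" using hi(1)[OF True] by simp
          finally show ?thesis using True by (simp add: cur_def)
        next
          case False then show ?thesis using h by (auto simp: cur_def PiE_def extensional_def)
        qed
      qed
      moreover have "w \<in> W"
      proof -
        have "w \<in> PiE (Sigma S J) (\<lambda>_. UNIV)" by (simp add: w_def)
        moreover have "G i (ext (J i) (\<lambda>j. w (i,j))) = z i" if "i \<in> S" for i
        proof -
          have "ext (J i) (\<lambda>j. w (i,j)) = ext (J i) (h i)" using that by (auto simp: ext_def w_def)
          then show ?thesis using hi(2)[OF that] by simp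
        qed
        ultimately show ?thesis by (simp add: W_def)
      qed
      ultimately show "h \<in> cur ` W" by blast
    qed
  qed
  have "card W = card (cur ` W)" using inj by (simp add: card_image)
  also have "\<dots> = (\<Prod>i\<in>S. card (Bset (J i) (G i) (z i)))" unfolding img using fS by (simp add: card_PiE)
  finally show ?thesis unfolding W_def .
qed

lemma count_S:
  fixes J :: "nat \<Rightarrow> nat set" and f :: "nat \<Rightarrow> nat \<Rightarrow> nat \<Rightarrow> bool" and G :: "nat \<Rightarrow> (nat \<Rightarrow> bool) \<Rightarrow> bool"
  assumes fU: "finite U" and fS: "finite S"
    and fJ: "\<And>i. i \<in> S \<Longrightarrow> finite (J i)"
    and rep: "\<And>i x. i \<in> S \<Longrightarrow> x \<in> Aset m U c \<Longrightarrow> P i x = G i (\<lambda>j. if j \<in> J i then lin m (f i j) x else False)"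
    and ind: "indep m U (Sigma S J) (\<lambda>(i,j). f i j)"
  shows "real (card {x\<in>Aset m U c. \<forall>i\<in>S. P i x = z i}) * 2^(\<Sum>i\<in>S. card (J i))
       = real (card (Aset m U c)) * (\<Prod>i\<in>S. real (card (Bset (J i) (G i) (z i))))"
proof -
  define K where "K = Sigma S J"
  define g where "g = (\<lambda>(i,j). f i j)"
  define A where "A = Aset m U c"
  define vec where "vec x = restrict (\<lambda>k. lin m (g k) x) K" for x
  define Psi where "Psi w = (\<forall>i\<in>S. G i (ext (J i) (\<lambda>j. w (i,j))) = z i)" for w :: "nat \<times> nat \<Rightarrow> bool"
  define W where "W = {w\<in>PiE K (\<lambda>_. UNIV). Psi w}"
  have fK: "finite K" using fS fJ by (simp add: K_def)
  have fA: "finite A" by (simp add: A_def Aset_def)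
  have eqset: "{x\<in>A. \<forall>i\<in>S. P i x = z i} = {x\<in>A. Psi (vec x)}"
  proof -
    have "(\<forall>i\<in>S. P i x = z i) = Psi (vec x)" if "x \<in> A" for x
    proof -
      have "P i x = G i (ext (J i) (\<lambda>j. vec x (i,j)))" if "i \<in> S" for i
      proof -
        have "(\<lambda>j. if j \<in> J i then lin m (f i j) x else False) = ext (J i) (\<lambda>j. vec x (i,j))"
          using \<open>i \<in> S\<close> by (auto simp: ext_def vec_def K_def g_def)
        then show ?thesis using rep[OF that] \<open>x \<in> A\<close> by (simp add: A_def)
      qed
      then show ?thesis by (simp add: Psi_def)
    qed
    then show ?thesis by auto
  qed
  have "real (card {x\<in>A. Psi (vec x)}) = (\<Sum>w\<in>W. real (card {x\<in>{x\<in>A. Psi (vec x)}. vec x = w}))"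
    by (rule card_fibers[symmetric]) (use fA fK in \<open>auto simp: W_def vec_def finite_PiE\<close>)
  also have "\<dots> = (\<Sum>w\<in>W. real (card A) / 2^card K)"
  proof (rule sum.cong[OF refl])
    fix w assume w: "w \<in> W"
    have "{x\<in>{x\<in>A. Psi (vec x)}. vec x = w} = {x\<in>A. \<forall>k\<in>K. lin m (g k) x = w k}"
    proof -
      have "(vec x = w) = (\<forall>k\<in>K. lin m (g k) x = w k)" for x
        unfolding vec_def using w by (simp add: W_def restrict_eq_iff)
      then have "{x\<in>A. vec x = w} = {x\<in>A. \<forall>k\<in>K. lin m (g k) x = w k}" by auto
      moreover have "{x\<in>{x\<in>A. Psi (vec x)}. vec x = w} = {x\<in>A. vec x = w}" using w by (auto simp: W_def)
      ultimately show ?thesis by simp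
    qed
    moreover have "real (card {x\<in>A. \<forall>k\<in>K. lin m (g k) x = w k}) * 2 ^ card K = real (card A)"
      unfolding A_def by (rule uniform[OF fU fK]) (use ind in \<open>simp add: K_def g_def\<close>)
    ultimately show "real (card {x\<in>{x\<in>A. Psi (vec x)}. vec x = w}) = real (card A) / 2^card K"
      by (simp add: field_simps)
  qed
  also have "\<dots> = real (card W) * real (card A) / 2^card K" by simp
  finally have a: "real (card {x\<in>A. Psi (vec x)}) * 2^card K = real (card W) * real (card A)" by simp
  have cK: "card K = (\<Sum>i\<in>S. card (J i))" using fS fJ by (simp add: K_def)
  have cW: "card W = (\<Prod>i\<in>S. card (Bset (J i) (G i) (z i)))"
    unfolding W_def Psi_def K_def by (rule curry_card[OF fS fJ])
  show ?thesis using a eqset cK cW by (simp add: A_def mult.commute)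
qed



lemma min_le_sqrt: "0 \<le> a \<Longrightarrow> 0 \<le> (b::real) \<Longrightarrow> min a b \<le> sqrt (a*b)"
proof -
  assume a: "0 \<le> a" "0 \<le> b"
  show ?thesis
  proof (cases "a \<le> b")
    case True
    have "a = sqrt (a*a)" using a by simp
    also have "\<dots> \<le> sqrt (a*b)" using True a by (intro real_sqrt_le_mono mult_left_mono) auto
    finally show ?thesis using True by simp
  next
    case False
    have "b = sqrt (b*b)" using a by simp
    also have "\<dots> \<le> sqrt (a*b)" using False a by (intro real_sqrt_le_mono mult_right_mono) auto
    finally show ?thesis using False by simp
  qed
qed

lemma sqrt_prod: "finite S \<Longrightarrow> sqrt (\<Prod>i\<in>S. f i) = (\<Prod>i\<in>S. sqrt (f i))"
  by (induction S rule: finite_induct) (auto simp: real_sqrt_mult)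

lemma card_Bset_sum:
  assumes "finite J"
  shows "card (Bset J G True) + card (Bset J G False) = 2 ^ card J"
proof -
  have "Bset J G True \<union> Bset J G False = PiE J (\<lambda>_. UNIV)" by (auto simp: Bset_def)
  moreover have "Bset J G True \<inter> Bset J G False = {}" by (auto simp: Bset_def)
  moreover have "finite (PiE J (\<lambda>_. UNIV::bool set))" using assms by (simp add: finite_PiE)
  ultimately have "card (Bset J G True) + card (Bset J G False) = card (PiE J (\<lambda>_. UNIV::bool set))"
    by (metis card_Un_disjoint finite_Un)
  also have "\<dots> = 2 ^ card J" using assms by (simp add: card_PiE)
  finally show ?thesis .
qed

lemma caseA:
  fixes J :: "nat \<Rightarrow> nat set" and f :: "nat \<Rightarrow> nat \<Rightarrow> nat \<Rightarrow> bool" and G :: "nat \<Rightarrow> (nat \<Rightarrow> bool) \<Rightarrow> bool"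
  assumes fU: "finite U" and S: "S \<subseteq> {..<n}"
    and J: "\<And>i. i \<in> S \<Longrightarrow> finite (J i) \<and> card (J i) \<le> r"
    and rep: "\<And>i x. i \<in> S \<Longrightarrow> x \<in> Aset m U c \<Longrightarrow> P i x = G i (\<lambda>j. if j \<in> J i then lin m (f i j) x else False)"
    and ind: "indep m U (Sigma S J) (\<lambda>(i,j). f i j)"
  shows "Phi m U c n P \<le> (1 - 1/2^(2*r+7))^card S"
proof -
  define A where "A = Aset m U c"
  define NA where "NA = real (card A)"
  define eps :: real where "eps = 1/2^(2*r+7)"
  define Z where "Z = PiE S (\<lambda>_. UNIV::bool set)"
  define proj where "proj y = restrict (\<lambda>i. y!i) S" for y :: "bool list"
  define pp where "pp i b = real (card (Bset (J i) (G i) b)) / 2^card (J i)" for i b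
  have fS: "finite S" using S finite_subset by blast
  have fJ: "\<And>i. i \<in> S \<Longrightarrow> finite (J i)" using J by blast
  have fZ: "finite Z" using fS by (simp add: Z_def finite_PiE)
  have eps1: "eps \<le> 1" by (simp add: eps_def)
  have rhs0: "0 \<le> (1 - eps)^card S" using eps1 by simp
  show ?thesis
  proof (cases "card A = 0")
    case True
    have "Phi m U c n P = (\<Sum>y\<in>vecs n. min 0 (ber13 y))" by (simp add: Phi_def True A_def[symmetric])
    also have "\<dots> = 0" using ber13_nonneg by (simp add: min_def)
    finally show ?thesis using rhs0 by (simp add: eps_def)
  next
    case False
    then have NA0: "NA > 0" by (simp add: NA_def)
    have Mz: "real (card {x\<in>A. \<forall>i\<in>S. P i x = z i}) / NA = (\<Prod>i\<in>S. pp i (z i))" for z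
    proof -
      have "real (card {x\<in>A. \<forall>i\<in>S. P i x = z i}) * 2^(\<Sum>i\<in>S. card (J i))
          = NA * (\<Prod>i\<in>S. real (card (Bset (J i) (G i) (z i))))"
        unfolding A_def NA_def by (rule count_S[where J=J and G=G and f=f and P=P, OF fU fS fJ rep ind])
      moreover have "(2::real)^(\<Sum>i\<in>S. card (J i)) = (\<Prod>i\<in>S. 2^card (J i))" by (simp add: power_sum)
      moreover have "(\<Prod>i\<in>S. (2::real)^card (J i)) > 0" by (rule prod_pos) simp
      ultimately show ?thesis using NA0
        by (simp add: pp_def prod_dividef field_simps)
    qed
    have Yz: "(\<Sum>y\<in>{y\<in>vecs n. proj y = z}. real (card {x\<in>A. Fv n P x = y}) / NA)
        = real (card {x\<in>A. \<forall>i\<in>S. P i x = z i}) / NA" if z: "z \<in> Z" for z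
    proof -
      have pr: "(proj (Fv n P x) = z) = (\<forall>i\<in>S. P i x = z i)" for x
      proof -
        have "(proj (Fv n P x) = z) = (\<forall>i\<in>S. Fv n P x ! i = z i)"
          unfolding proj_def using z by (simp add: Z_def restrict_eq_iff)
        also have "\<dots> = (\<forall>i\<in>S. P i x = z i)"
        proof -
          have "Fv n P x ! i = P i x" if "i \<in> S" for i
          proof -
            have "i < n" using S that by auto
            then show ?thesis by (simp add: Fv_def)
          qed
          then show ?thesis by auto
        qed
        finally show ?thesis .
      qed
      have "(\<Sum>y\<in>{y\<in>vecs n. proj y = z}. real (card {x\<in>A. Fv n P x = y}))
          = (\<Sum>y\<in>{y\<in>vecs n. proj y = z}. real (card {x\<in>{x\<in>A. proj (Fv n P x) = z}. Fv n P x = y}))"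
        by (rule sum.cong[OF refl]) (auto intro!: arg_cong[where f=card])
      also have "\<dots> = real (card {x\<in>A. proj (Fv n P x) = z})"
        by (rule card_fibers) (auto simp: A_def Aset_def Fv_in)
      finally show ?thesis using pr by (simp add: sum_divide_distrib[symmetric])
    qed
    have "Phi m U c n P = (\<Sum>y\<in>vecs n. min (real (card {x\<in>A. Fv n P x = y}) / NA) (ber13 y))"
      by (simp add: Phi_def A_def NA_def)
    also have "\<dots> \<le> (\<Sum>z\<in>Z. min (\<Sum>y\<in>{y\<in>vecs n. proj y = z}. real (card {x\<in>A. Fv n P x = y}) / NA)
                                (\<Sum>y\<in>{y\<in>vecs n. proj y = z}. ber13 y))"
      by (rule group_min) (use fZ in \<open>auto simp: Z_def proj_def\<close>)
    also have "\<dots> = (\<Sum>z\<in>Z. min (\<Prod>i\<in>S. pp i (z i)) (\<Prod>i\<in>S. qb (z i)))"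
    proof (rule sum.cong[OF refl])
      fix z assume z: "z \<in> Z"
      show "min (\<Sum>y\<in>{y\<in>vecs n. proj y = z}. real (card {x\<in>A. Fv n P x = y}) / NA)
                                (\<Sum>y\<in>{y\<in>vecs n. proj y = z}. ber13 y)
          = min (\<Prod>i\<in>S. pp i (z i)) (\<Prod>i\<in>S. qb (z i))"
        using Yz[OF z] Mz[of z] ber_marg[OF S, of z] z by (simp add: Z_def proj_def)
    qed
    also have "\<dots> \<le> (\<Sum>z\<in>Z. \<Prod>i\<in>S. sqrt (pp i (z i) * qb (z i)))"
    proof (rule sum_mono)
      fix z
      have "min (\<Prod>i\<in>S. pp i (z i)) (\<Prod>i\<in>S. qb (z i)) \<le> sqrt ((\<Prod>i\<in>S. pp i (z i)) * (\<Prod>i\<in>S. qb (z i)))"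
        by (rule min_le_sqrt) (auto simp: pp_def qb_def intro!: prod_nonneg)
      also have "\<dots> = (\<Prod>i\<in>S. sqrt (pp i (z i) * qb (z i)))"
        using fS by (simp add: sqrt_prod prod.distrib[symmetric])
      finally show "min (\<Prod>i\<in>S. pp i (z i)) (\<Prod>i\<in>S. qb (z i)) \<le> (\<Prod>i\<in>S. sqrt (pp i (z i) * qb (z i)))" .
    qed
    also have "\<dots> = (\<Prod>i\<in>S. \<Sum>b\<in>UNIV. sqrt (pp i b * qb b))"
      unfolding Z_def by (rule prod_sum_PiE[symmetric]) (use fS in auto)
    also have "\<dots> \<le> (\<Prod>i\<in>S. 1 - eps)"
    proof (rule prod_mono)
      fix i assume i: "i \<in> S"
      have c: "card (Bset (J i) (G i) True) + card (Bset (J i) (G i) False) = 2 ^ card (J i)"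
        using card_Bset_sum fJ[OF i] by blast
      then have a: "card (Bset (J i) (G i) True) \<le> 2 ^ card (J i)" by linarith
      have ppF: "pp i False = 1 - real (card (Bset (J i) (G i) True)) / 2^card (J i)"
      proof -
        have "real (card (Bset (J i) (G i) False)) = 2 ^ card (J i) - real (card (Bset (J i) (G i) True))"
          using c by (metis add_diff_cancel_left' of_nat_add of_nat_numeral of_nat_power)
        then show ?thesis by (simp add: pp_def field_simps)
      qed
      have "(\<Sum>b\<in>UNIV. sqrt (pp i b * qb b)) = sqrt (pp i True * (1/3)) + sqrt (pp i False * (2/3))"
        by (simp add: UNIV_bool qb_def)
      also have "\<dots> \<le> 1 - eps" unfolding ppF eps_def
        using bc_dyadic[OF a, of r] J[OF i] by (simp add: pp_def)
      finally show "0 \<le> (\<Sum>b\<in>UNIV. sqrt (pp i b * qb b)) \<and> (\<Sum>b\<in>UNIV. sqrt (pp i b * qb b)) \<le> 1 - eps"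
        by (auto intro!: sum_nonneg simp: pp_def qb_def)
    qed
    also have "\<dots> = (1 - eps)^card S" by simp
    finally show ?thesis by (simp add: eps_def)
  qed
qed



definition key :: "nat \<Rightarrow> (nat\<Rightarrow>bool) set \<Rightarrow> bool list \<Rightarrow> (nat\<Rightarrow>bool) \<Rightarrow> bool" where
  "key m U' x = (\<lambda>v. if v \<in> U' then lin m v x else False)"

lemma key_fiber:
  assumes UU: "U \<subseteq> U'" and x0: "x0 \<in> Aset m U c"
  shows "{x\<in>Aset m U c. key m U' x = key m U' x0} = Aset m U' (key m U' x0)"
proof
  show "{x\<in>Aset m U c. key m U' x = key m U' x0} \<subseteq> Aset m U' (key m U' x0)"
  proof
    fix x assume "x \<in> {x\<in>Aset m U c. key m U' x = key m U' x0}"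
    then have x: "x \<in> Aset m U c" "key m U' x = key m U' x0" by auto
    have "lin m u x = key m U' x0 u" if "u \<in> U'" for u
      using x(2) that by (metis key_def)
    then show "x \<in> Aset m U' (key m U' x0)" using x(1) by (auto simp: Aset_def)
  qed
next
  show "Aset m U' (key m U' x0) \<subseteq> {x\<in>Aset m U c. key m U' x = key m U' x0}"
  proof
    fix x assume x: "x \<in> Aset m U' (key m U' x0)"
    have "lin m u x = c u" if "u \<in> U" for u
    proof -
      have "u \<in> U'" using UU that by auto
      then have "lin m u x = lin m u x0" using x by (auto simp: Aset_def key_def)
      then show ?thesis using x0 that by (auto simp: Aset_def)
    qed
    moreover have "key m U' x = key m U' x0"
    proof
      fix v show "key m U' x v = key m U' x0 v"
        using x by (cases "v \<in> U'") (auto simp: Aset_def key_def)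
    qed
    ultimately show "x \<in> {x\<in>Aset m U c. key m U' x = key m U' x0}" using x by (auto simp: Aset_def)
  qed
qed

lemma key_subset: "U \<subseteq> U' \<Longrightarrow> c' \<in> key m U' ` Aset m U c \<Longrightarrow> Aset m U' c' \<subseteq> Aset m U c"
  using key_fiber by blast

lemma card_keys:
  assumes UU: "U \<subseteq> U'" and fU': "finite U'"
  shows "card (key m U' ` Aset m U c) \<le> 2 ^ card (U' - U)"
proof -
  define E where "E h = (\<lambda>v. if v \<in> U then c v else if v \<in> U' then h v else False)" for h :: "(nat\<Rightarrow>bool) \<Rightarrow> bool"
  have "key m U' ` Aset m U c \<subseteq> E ` PiE (U' - U) (\<lambda>_. UNIV)"
  proof
    fix k assume "k \<in> key m U' ` Aset m U c"
    then obtain x where x: "x \<in> Aset m U c" "k = key m U' x" by auto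
    have "k = E (restrict k (U' - U))"
    proof
      fix v show "k v = E (restrict k (U' - U)) v"
        using x UU by (auto simp: E_def key_def Aset_def)
    qed
    then show "k \<in> E ` PiE (U' - U) (\<lambda>_. UNIV)" by auto
  qed
  then have "card (key m U' ` Aset m U c) \<le> card (E ` PiE (U' - U) (\<lambda>_. UNIV::bool set))"
    by (intro card_mono finite_imageI finite_PiE) (use fU' in auto)
  also have "\<dots> \<le> card (PiE (U' - U) (\<lambda>_. UNIV::bool set))" by (rule card_image_le) (use fU' in \<open>auto intro: finite_PiE\<close>)
  also have "\<dots> = 2 ^ card (U' - U)" using fU' by (simp add: card_PiE)
  finally show ?thesis .
qed

lemma decomp:
  assumes UU: "U \<subseteq> U'"
  shows "Phi m U c n P \<le> (\<Sum>c'\<in>key m U' ` Aset m U c. Phi m U' c' n P)"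
proof -
  define A where "A = Aset m U c"
  define C where "C = key m U' ` A"
  have fA: "finite A" by (simp add: A_def Aset_def)
  have fC: "finite C" using fA by (simp add: C_def)
  have split: "real (card {x\<in>A. Fv n P x = y}) = (\<Sum>c'\<in>C. real (card {x\<in>Aset m U' c'. Fv n P x = y}))" for y
  proof -
    have "real (card {x\<in>A. Fv n P x = y}) = (\<Sum>c'\<in>C. real (card {x\<in>{x\<in>A. Fv n P x = y}. key m U' x = c'}))"
      by (rule card_fibers[symmetric]) (use fA fC in \<open>auto simp: C_def\<close>)
    also have "\<dots> = (\<Sum>c'\<in>C. real (card {x\<in>Aset m U' c'. Fv n P x = y}))"
    proof (rule sum.cong[OF refl])
      fix c' assume "c' \<in> C"
      then obtain x0 where x0: "x0 \<in> A" "c' = key m U' x0" by (auto simp: C_def)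
      have "{x\<in>{x\<in>A. Fv n P x = y}. key m U' x = c'} = {x\<in>{x\<in>A. key m U' x = c'}. Fv n P x = y}" by auto
      also have "\<dots> = {x\<in>Aset m U' c'. Fv n P x = y}"
        using key_fiber[OF UU, of x0 m c] x0 by (simp add: A_def)
      finally show "real (card {x\<in>{x\<in>A. Fv n P x = y}. key m U' x = c'}) = real (card {x\<in>Aset m U' c'. Fv n P x = y})"
        by simp
    qed
    finally show ?thesis .
  qed
  have "Phi m U c n P = (\<Sum>y\<in>vecs n. min ((\<Sum>c'\<in>C. real (card {x\<in>Aset m U' c'. Fv n P x = y})) / real (card A)) (ber13 y))"
    by (simp add: Phi_def A_def[symmetric] split)
  also have "\<dots> \<le> (\<Sum>y\<in>vecs n. \<Sum>c'\<in>C. min (real (card {x\<in>Aset m U' c'. Fv n P x = y}) / real (card A)) (ber13 y))"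
    by (rule sum_mono) (simp add: sum_divide_distrib min_sum_le[OF fC] ber13_nonneg)
  also have "\<dots> \<le> (\<Sum>y\<in>vecs n. \<Sum>c'\<in>C. min (real (card {x\<in>Aset m U' c'. Fv n P x = y}) / real (card (Aset m U' c'))) (ber13 y))"
  proof (intro sum_mono min.mono order.refl)
    fix y c' assume c': "c' \<in> C"
    have sub: "Aset m U' c' \<subseteq> A" using key_subset[OF UU] c' by (simp add: A_def C_def)
    have fA': "finite (Aset m U' c')" by (simp add: Aset_def)
    have le1: "card {x\<in>Aset m U' c'. Fv n P x = y} \<le> card (Aset m U' c')" by (rule card_mono[OF fA']) auto
    have le2: "card (Aset m U' c') \<le> card A" by (rule card_mono[OF fA sub])
    show "real (card {x\<in>Aset m U' c'. Fv n P x = y}) / real (card A)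
        \<le> real (card {x\<in>Aset m U' c'. Fv n P x = y}) / real (card (Aset m U' c'))"
    proof (cases "card (Aset m U' c') = 0")
      case True then show ?thesis using le1 by simp
    next
      case False then show ?thesis using le2 by (intro divide_left_mono) auto
    qed
  qed
  also have "\<dots> = (\<Sum>c'\<in>C. Phi m U' c' n P)" by (subst sum.swap) (simp add: Phi_def)
  finally show ?thesis by (simp add: C_def A_def)
qed



definition rk_le :: "nat \<Rightarrow> (nat\<Rightarrow>bool) set \<Rightarrow> ((nat\<Rightarrow>bool)\<Rightarrow>bool) \<Rightarrow> nat \<Rightarrow> (bool list \<Rightarrow> bool) \<Rightarrow> bool" where
  "rk_le m U c r Q = (\<exists>(J::nat set) (f::nat \<Rightarrow> nat \<Rightarrow> bool) (G::(nat\<Rightarrow>bool)\<Rightarrow>bool). finite J \<and> card J \<le> r \<and>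
     (\<forall>x\<in>Aset m U c. Q x = G (\<lambda>j. if j \<in> J then lin m (f j) x else False)))"

lemma par_image: "inj_on h A \<Longrightarrow> par (h ` A) P = par A (\<lambda>a. P (h a))"
proof -
  assume inj: "inj_on h A"
  have "{k\<in>h ` A. P k} = h ` {a\<in>A. P (h a)}" by auto
  moreover have "card (h ` {a\<in>A. P (h a)}) = card {a\<in>A. P (h a)}"
    by (rule card_image) (rule inj_on_subset[OF inj], auto)
  ultimately show ?thesis by (simp add: par_def)
qed

lemma reduce:
  fixes J :: "nat \<Rightarrow> nat set" and f :: "nat \<Rightarrow> nat \<Rightarrow> nat \<Rightarrow> bool" and G :: "nat \<Rightarrow> (nat \<Rightarrow> bool) \<Rightarrow> bool"
  assumes fU: "finite U"
    and H: "\<And>i. i < n \<Longrightarrow> finite (J i) \<and> card (J i) \<le> r \<and>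
          (\<forall>x\<in>Aset m U c. P i x = G i (\<lambda>j. if j \<in> J i then lin m (f i j) x else False))"
    and S: "S \<subseteq> {..<n}"
    and ind: "indep m U (Sigma S J) (\<lambda>(i,j). f i j)"
    and maxl: "\<And>i. i < n \<Longrightarrow> i \<notin> S \<Longrightarrow> \<not> indep m U (Sigma (insert i S) J) (\<lambda>(i,j). f i j)"
    and U': "U' = U \<union> (\<lambda>(i,j). f i j) ` Sigma S J"
    and c': "c' \<in> key m U' ` Aset m U c"
    and i: "i < n"
  shows "rk_le m U' c' (r - 1) (P i)"
proof -
  define g where "g = (\<lambda>(i,j). f i j)"
  define A' where "A' = Aset m U' c'"
  have UU: "U \<subseteq> U'" using U' by auto
  have sub: "A' \<subseteq> Aset m U c" using key_subset[OF UU c'] by (simp add: A'_def)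
  have linc: "lin m v x = c' v" if "x \<in> A'" "v \<in> U'" for x v using that by (auto simp: A'_def Aset_def)
  have Hi12: "finite (J i)" "card (J i) \<le> r" using H[OF i] by auto
  have Hi3: "\<And>x. x \<in> A' \<Longrightarrow> P i x = G i (\<lambda>j. if j \<in> J i then lin m (f i j) x else False)"
    using H[OF i] sub by blast
  note Hi = Hi12 Hi3
  show ?thesis
  proof (cases "i \<in> S")
    case True
    define const where "const = G i (\<lambda>j. if j \<in> J i then c' (f i j) else False)"
    have "P i x = const" if x: "x \<in> A'" for x
    proof -
      have "(\<lambda>j. if j \<in> J i then lin m (f i j) x else False) = (\<lambda>j. if j \<in> J i then c' (f i j) else False)"
      proof
        fix j show "(if j \<in> J i then lin m (f i j) x else False) = (if j \<in> J i then c' (f i j) else False)"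
        proof (cases "j \<in> J i")
          case jJ: True
          have "f i j \<in> U'" using True jJ U' by force
          then show ?thesis using linc[OF x] jJ by simp
        qed simp
      qed
      then show ?thesis using Hi(3)[OF x] by (simp add: const_def)
    qed
    then show ?thesis unfolding rk_le_def
      by (intro exI[of _ "{}"] exI[of _ "f i"] exI[of _ "\<lambda>_. const"]) (simp add: A'_def)
  next
    case False
    obtain T R where T: "T \<subseteq> U" and R: "R \<subseteq> Sigma (insert i S) J" "R \<noteq> {}"
      and z: "zm m (vx (xsum T (\<lambda>u. u)) (xsum R g))"
      using maxl[OF i False] unfolding indep_def g_def by blast
    have "\<not> R \<subseteq> Sigma S J"
    proof
      assume "R \<subseteq> Sigma S J"
      then show False using ind T R(2) z unfolding indep_def g_def by blast
    qed
    then obtain k where k: "k \<in> R" "k \<notin> Sigma S J" by blast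
    then obtain j0 where kj: "k = (i, j0)" and j0: "j0 \<in> J i" using R(1) by auto
    define R1 where "R1 = R \<inter> Sigma S J"
    define R2 where "R2 = {j. (i,j) \<in> R}"
    have R2J: "R2 \<subseteq> J i" using R(1) by (auto simp: R2_def)
    have fR2: "finite R2" using finite_subset[OF R2J Hi(1)] .
    have j0R2: "j0 \<in> R2" using k kj by (simp add: R2_def)
    have fSJ: "finite (Sigma (insert i S) J)"
      using S H finite_subset[of S "{..<n}"] i by (intro finite_SigmaI) auto
    have fR: "finite R" using finite_subset[OF R(1) fSJ] .
    have fR1: "finite R1" using fR by (simp add: R1_def)
    have fT: "finite T" using finite_subset[OF T fU] .
    have Rsplit: "R = R1 \<union> Pair i ` R2" using R(1) False by (auto simp: R1_def R2_def)
    have disj: "R1 \<inter> Pair i ` R2 = {}" using False by (auto simp: R1_def)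
    define kap where "kap = (par T c' \<noteq> par R1 (\<lambda>k. c' (g k)))"
    have key_eq: "lin m (f i j0) x = (kap \<noteq> par (R2 - {j0}) (\<lambda>j. lin m (f i j) x))" if x: "x \<in> A'" for x
    proof -
      have "lin m (vx (xsum T (\<lambda>u. u)) (xsum R g)) x = False" using z by (rule lin_zm)
      then have e1: "par T (\<lambda>u. lin m u x) = par R (\<lambda>k. lin m (g k) x)"
        by (simp add: lin_vx lin_xsum fT fR)
      have e2: "par T (\<lambda>u. lin m u x) = par T c'"
        by (rule par_cong) (use T UU linc[OF x] in auto)
      have e3: "par R (\<lambda>k. lin m (g k) x) = (par R1 (\<lambda>k. lin m (g k) x) \<noteq> par (Pair i ` R2) (\<lambda>k. lin m (g k) x))"
        unfolding Rsplit by (rule par_union) (use fR1 fR2 disj in auto)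
      have e4: "par R1 (\<lambda>k. lin m (g k) x) = par R1 (\<lambda>k. c' (g k))"
      proof (rule par_cong)
        fix k assume "k \<in> R1"
        then have "g k \<in> U'" using U' by (auto simp: R1_def g_def)
        then show "lin m (g k) x = c' (g k)" using linc[OF x] by simp
      qed
      have e5: "par (Pair i ` R2) (\<lambda>k. lin m (g k) x) = par R2 (\<lambda>j. lin m (f i j) x)"
        by (subst par_image) (auto simp: inj_on_def g_def)
      have e6: "par R2 (\<lambda>j. lin m (f i j) x) = (lin m (f i j0) x \<noteq> par (R2 - {j0}) (\<lambda>j. lin m (f i j) x))"
      proof -
        have "R2 = insert j0 (R2 - {j0})" using j0R2 by auto
        then have "par R2 (\<lambda>j. lin m (f i j) x) = par (insert j0 (R2 - {j0})) (\<lambda>j. lin m (f i j) x)" by simp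
        also have "\<dots> = (lin m (f i j0) x \<noteq> par (R2 - {j0}) (\<lambda>j. lin m (f i j) x))"
          by (rule par_insert) (use fR2 in auto)
        finally show ?thesis .
      qed
      show ?thesis using e1 e2 e3 e4 e5 e6 unfolding kap_def by auto
    qed
    define J' where "J' = J i - {j0}"
    define G' where "G' v = G i (v(j0 := (kap \<noteq> par (R2 - {j0}) v)))" for v
    have "P i x = G' (\<lambda>j. if j \<in> J' then lin m (f i j) x else False)" if x: "x \<in> A'" for x
    proof -
      define w where "w = (\<lambda>j. if j \<in> J' then lin m (f i j) x else False)"
      have pw: "par (R2 - {j0}) w = par (R2 - {j0}) (\<lambda>j. lin m (f i j) x)"
        by (rule par_cong) (use R2J in \<open>auto simp: w_def J'_def\<close>)
      have "w(j0 := (kap \<noteq> par (R2 - {j0}) w)) = (\<lambda>j. if j \<in> J i then lin m (f i j) x else False)"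
      proof
        fix j show "(w(j0 := (kap \<noteq> par (R2 - {j0}) w))) j = (if j \<in> J i then lin m (f i j) x else False)"
          using pw key_eq[OF x] j0 by (cases "j = j0") (auto simp: w_def J'_def)
      qed
      then show ?thesis using Hi(3)[OF x] by (simp add: G'_def w_def)
    qed
    moreover have "finite J'" using Hi(1) by (simp add: J'_def)
    moreover have "card J' \<le> r - 1" using Hi(1,2) j0 by (simp add: J'_def)
    ultimately show ?thesis unfolding rk_le_def A'_def
      by (intro exI[of _ J'] exI[of _ "f i"] exI[of _ G']) auto
  qed
qed



primrec ar :: "nat \<Rightarrow> real" where
  "ar 0 = 1/128"
| "ar (Suc r) = ar r / (2 * real (Suc r) * 2^(2 * Suc r + 7))"

primrec bt :: "nat \<Rightarrow> real" where
  "bt 0 = 1"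
| "bt (Suc r) = ar r / (2 * real (Suc r))"

lemma ar_pos: "0 < ar r" by (induction r) auto

lemma one_le_D: "(1::real) \<le> 2 * real (Suc r) * 2^(2 * Suc r + 7)"
proof -
  have "(1::real) \<le> real (Suc r)" by simp
  moreover have "(1::real) \<le> 2^(2 * Suc r + 7)" by simp
  ultimately have "(1::real) * 1 \<le> real (Suc r) * 2^(2 * Suc r + 7)" by (intro mult_mono) auto
  then show ?thesis by (simp only: mult.assoc)
qed

lemma suc_le_pow: "Suc r \<le> 2^r"
  by (induction r) auto

lemma ar_le1: "ar r \<le> 1"
proof (induction r)
  case (Suc r)
  have "1 \<le> 2 * real (Suc r) * 2^(2 * Suc r + 7)" using one_le_D .
  then have "ar r / (2 * real (Suc r) * 2^(2 * Suc r + 7)) \<le> ar r / 1"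
    using ar_pos[of r] by (intro divide_left_mono) auto
  then show ?case using Suc.IH by (simp only: ar.simps div_by_1)
qed simp

lemma bt_le1: "bt r \<le> 1"
proof (cases r)
  case (Suc r')
  have "ar r' / (2 * real (Suc r')) \<le> ar r'" using ar_pos[of r'] by (simp add: divide_le_eq)
  then show ?thesis using Suc ar_le1[of r'] by simp
qed simp

lemma bt_pos: "0 < bt r" by (cases r) (auto simp: ar_pos)

lemma ar_bt: "ar r = bt r * (1/2^(2*r+7))"
  by (cases r) (simp_all add: divide_divide_eq_left)

lemma step_ineq: "real (Suc r) * bt (Suc r) + ar (Suc r) \<le> ar r"
proof -
  have "real (Suc r) > 0" by simp
  then have a: "real (Suc r) * bt (Suc r) = ar r / 2" by (simp only: bt.simps) (simp add: field_simps)
  have "ar (Suc r) \<le> ar r / 2"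
  proof -
    have "(2::real) \<le> 2 * real (Suc r) * 2^(2 * Suc r + 7)"
    proof -
      have "(1::real) \<le> real (Suc r)" by simp
      moreover have "(1::real) \<le> 2^(2 * Suc r + 7)" by simp
      ultimately have "(1::real) * 1 \<le> real (Suc r) * 2^(2 * Suc r + 7)" by (intro mult_mono) auto
      then show ?thesis by (simp only: mult.assoc)
    qed
    then have "ar r / (2 * real (Suc r) * 2^(2 * Suc r + 7)) \<le> ar r / 2"
      using ar_pos[of r] by (intro divide_left_mono) auto
    then show ?thesis by simp
  qed
  then show ?thesis using a by linarith
qed

lemma ar_lower: "1/2^(12*r^2+7) \<le> ar r"
proof (induction r)
  case 0 then show ?case by simp
next
  case (Suc r)
  have d: "2 * real (Suc r) \<le> 2^(Suc r)"
  proof -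
    have "real (Suc r) \<le> real (2^r)" using suc_le_pow[of r] by (simp only: of_nat_le_iff)
    then show ?thesis by simp
  qed
  have "1/(2::real)^(12*(Suc r)^2+7) \<le> (1/2^(12*r^2+7)) / (2^(Suc r) * 2^(2 * Suc r + 7))"
  proof -
    have "(2::real)^(12*r^2+7) * (2^(Suc r) * 2^(2 * Suc r + 7)) = 2^(12*r^2+7 + Suc r + (2 * Suc r + 7))"
      by (simp only: power_add mult.assoc)
    also have "12*r^2+7 + Suc r + (2 * Suc r + 7) = 12*r^2 + 3*r + 17" by simp
    finally have "(2::real)^(12*r^2+7) * (2^(Suc r) * 2^(2 * Suc r + 7)) = 2^(12*r^2 + 3*r + 17)" .
    moreover have "(2::real)^(12*r^2 + 3*r + 17) \<le> 2^(12*(Suc r)^2+7)"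
      by (rule power_increasing) (auto simp: power2_eq_square algebra_simps)
    ultimately show ?thesis by (simp add: field_simps)
  qed
  also have "\<dots> \<le> ar r / (2^(Suc r) * 2^(2 * Suc r + 7))"
    using Suc by (intro divide_right_mono) auto
  also have "\<dots> \<le> ar r / (2 * real (Suc r) * 2^(2 * Suc r + 7))"
    using ar_pos[of r] d by (intro divide_left_mono mult_right_mono mult_pos_pos) auto
  finally show ?case by simp
qed



lemma rk_choice:
  assumes rk: "\<forall>i<n. rk_le m U c r (P i)"
  obtains J :: "nat \<Rightarrow> nat set" and f :: "nat \<Rightarrow> nat \<Rightarrow> nat \<Rightarrow> bool" and G :: "nat \<Rightarrow> (nat \<Rightarrow> bool) \<Rightarrow> bool"
  where "\<And>i. i < n \<Longrightarrow> finite (J i) \<and> card (J i) \<le> r \<and>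
          (\<forall>x\<in>Aset m U c. P i x = G i (\<lambda>j. if j \<in> J i then lin m (f i j) x else False))"
proof -
  define Q where "Q i t = (finite (fst t) \<and> card (fst t) \<le> r \<and>
        (\<forall>x\<in>Aset m U c. P i x = snd (snd t) (\<lambda>j. if j \<in> fst t then lin m (fst (snd t) j) x else False)))"
    for i and t :: "nat set \<times> (nat \<Rightarrow> nat \<Rightarrow> bool) \<times> ((nat \<Rightarrow> bool) \<Rightarrow> bool)"
  have "\<exists>t. i < n \<longrightarrow> Q i t" for i
  proof (cases "i < n")
    case True
    then have "rk_le m U c r (P i)" using rk by simp
    then have "\<exists>(J0::nat set) (f0::nat \<Rightarrow> nat \<Rightarrow> bool) (G0::(nat \<Rightarrow> bool) \<Rightarrow> bool). finite J0 \<and> card J0 \<le> r \<and>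
      (\<forall>x\<in>Aset m U c. P i x = G0 (\<lambda>j. if j \<in> J0 then lin m (f0 j) x else False))"
      by (simp only: rk_le_def)
    then obtain J0 :: "nat set" and f0 :: "nat \<Rightarrow> nat \<Rightarrow> bool" and G0 :: "(nat \<Rightarrow> bool) \<Rightarrow> bool"
      where "finite J0 \<and> card J0 \<le> r \<and>
      (\<forall>x\<in>Aset m U c. P i x = G0 (\<lambda>j. if j \<in> J0 then lin m (f0 j) x else False))" by blast
    then have "Q i (J0, f0, G0)" by (simp add: Q_def)
    then show ?thesis by (intro exI impI)
  qed simp
  then have "\<forall>i. \<exists>t. i < n \<longrightarrow> Q i t" by (rule allI)
  from choice[OF this] obtain T where T: "\<forall>i. i < n \<longrightarrow> Q i (T i)" by (rule exE)
  show ?thesis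
  proof (rule that[of "\<lambda>i. fst (T i)" "\<lambda>i. snd (snd (T i))" "\<lambda>i. fst (snd (T i))"])
    fix i assume "i < n"
    then have "Q i (T i)" using T by simp
    then show "finite (fst (T i)) \<and> card (fst (T i)) \<le> r \<and>
        (\<forall>x\<in>Aset m U c. P i x = snd (snd (T i)) (\<lambda>j. if j \<in> fst (T i) then lin m (fst (snd (T i)) j) x else False))"
      unfolding Q_def by assumption
  qed
qed

lemma pow_le_exp: "(2::real)^k \<le> exp (real k)"
proof -
  have "(2::real) \<le> exp 1" using exp_ge_add_one_self[of 1] by simp
  then have "(2::real)^k \<le> (exp 1)^k" by (intro power_mono) auto
  also have "\<dots> = exp (real k)" by (simp add: exp_of_nat_mult[symmetric])
  finally show ?thesis .
qed

lemma main_step: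
  assumes fU: "finite U" and rk: "\<forall>i<n. rk_le m U c r (P i)"
    and IH: "r > 0 \<Longrightarrow> (\<And>U c. finite U \<Longrightarrow> \<forall>i<n. rk_le m U c (r - 1) (P i) \<Longrightarrow> Phi m U c n P \<le> exp (- ar (r - 1) * n))"
  shows "Phi m U c n P \<le> exp (- ar r * n)"
proof -
  obtain J :: "nat \<Rightarrow> nat set" and G :: "nat \<Rightarrow> (nat \<Rightarrow> bool) \<Rightarrow> bool" and f :: "nat \<Rightarrow> nat \<Rightarrow> nat \<Rightarrow> bool"
    where H: "\<And>i. i < n \<Longrightarrow> finite (J i) \<and> card (J i) \<le> r \<and>
          (\<forall>x\<in>Aset m U c. P i x = G i (\<lambda>j. if j \<in> J i then lin m (f i j) x else False))"
    apply (rule rk_choice[OF rk])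
    subgoal premises p using p(2) by (rule p(1))
    done
  define g where "g = (\<lambda>(i::nat,j::nat). f i j)"
  define SS where "SS = {S. S \<subseteq> {..<n} \<and> indep m U (Sigma S J) g}"
  have fSS: "finite SS" by (rule finite_subset[of _ "Pow {..<n}"]) (auto simp: SS_def)
  have eSS: "{} \<in> SS" by (simp add: SS_def indep_def)
  obtain S where S: "S \<in> SS" and Smax: "\<And>S'. S' \<in> SS \<Longrightarrow> card S' \<le> card S"
  proof -
    have "Max (card ` SS) \<in> card ` SS" using fSS eSS by (intro Max_in) auto
    then obtain S where "S \<in> SS" "card S = Max (card ` SS)" by auto
    moreover have "\<And>S'. S' \<in> SS \<Longrightarrow> card S' \<le> Max (card ` SS)" using fSS by (intro Max_ge) auto
    ultimately show ?thesis using that by metis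
  qed
  have Sn: "S \<subseteq> {..<n}" and indS: "indep m U (Sigma S J) g" using S by (auto simp: SS_def)
  have fS: "finite S" using Sn finite_subset by blast
  have maxl: "\<not> indep m U (Sigma (insert i S) J) g" if "i < n" "i \<notin> S" for i
  proof
    assume "indep m U (Sigma (insert i S) J) g"
    then have "insert i S \<in> SS" using Sn that by (auto simp: SS_def)
    then have "card (insert i S) \<le> card S" by (rule Smax)
    then show False using fS that by simp
  qed
  define eps :: real where "eps = 1/2^(2*r+7)"
  show ?thesis
  proof (cases "bt r * n \<le> card S")
    case True
    have "Phi m U c n P \<le> (1 - eps)^card S"
      unfolding eps_def
    proof (rule caseA[OF fU Sn, where J=J and f=f and G=G])
      show "\<And>i. i \<in> S \<Longrightarrow> finite (J i) \<and> card (J i) \<le> r" using H Sn by blast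
      show "\<And>i x. i \<in> S \<Longrightarrow> x \<in> Aset m U c \<Longrightarrow> P i x = G i (\<lambda>j. if j \<in> J i then lin m (f i j) x else False)"
        using H Sn by blast
      show "indep m U (Sigma S J) (\<lambda>(i,j). f i j)" using indS by (simp only: g_def)
    qed
    also have "\<dots> \<le> exp (- eps)^card S"
      using exp_ge_add_one_self[of "-eps"] by (intro power_mono) (auto simp: eps_def)
    also have "\<dots> = exp (- eps * card S)" by (simp add: exp_of_nat_mult[symmetric] mult.commute)
    also have "\<dots> \<le> exp (- eps * (bt r * n))"
    proof -
      have "eps * (bt r * n) \<le> eps * card S" using True by (intro mult_left_mono) (auto simp: eps_def)
      then show ?thesis by simp
    qed
    also have "- eps * (bt r * n) = - ar r * n" by (simp add: ar_bt eps_def)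
    finally show ?thesis .
  next
    case False
    have "S \<noteq> {..<n}"
    proof
      assume "S = {..<n}"
      then have "real (card S) = n" by simp
      moreover have "bt r * n \<le> n" using bt_le1[of r] by (simp add: mult_left_le_one_le bt_pos less_imp_le)
      ultimately show False using False by simp
    qed
    then obtain i0 where i0: "i0 < n" "i0 \<notin> S" using Sn by auto
    have r0: "r > 0"
    proof (rule ccontr)
      assume "\<not> r > 0"
      then have "J i0 = {}" using H[OF i0(1)] by auto
      then have "Sigma (insert i0 S) J = Sigma S J" by auto
      then show False using maxl[OF i0] indS by simp
    qed
    define U' where "U' = U \<union> g ` Sigma S J"
    have fSJ: "finite (Sigma S J)" using fS H Sn by (intro finite_SigmaI) auto
    have fU': "finite U'" using fU fSJ by (simp add: U'_def)
    have UU: "U \<subseteq> U'" by (simp add: U'_def)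
    define C where "C = key m U' ` Aset m U c"
    have "Phi m U c n P \<le> (\<Sum>c'\<in>C. Phi m U' c' n P)" unfolding C_def by (rule decomp[OF UU])
    also have "\<dots> \<le> (\<Sum>c'\<in>C. exp (- ar (r - 1) * n))"
    proof (rule sum_mono)
      fix c' assume c': "c' \<in> C"
      have "\<forall>i<n. rk_le m U' c' (r - 1) (P i)"
      proof (intro allI impI)
        fix i assume i: "i < n"
        have indS': "indep m U (Sigma S J) (\<lambda>(i,j). f i j)" using indS by (simp only: g_def)
        have maxl': "\<And>i. i < n \<Longrightarrow> i \<notin> S \<Longrightarrow> \<not> indep m U (Sigma (insert i S) J) (\<lambda>(i,j). f i j)"
          using maxl by (simp only: g_def)
        have U'eq: "U' = U \<union> (\<lambda>(i,j). f i j) ` Sigma S J" by (simp only: U'_def g_def)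
        have c'': "c' \<in> key m U' ` Aset m U c" using c' by (simp only: C_def)
        show "rk_le m U' c' (r - 1) (P i)" by (rule reduce[OF fU H Sn indS' maxl' U'eq c'' i])
      qed
      then show "Phi m U' c' n P \<le> exp (- ar (r - 1) * n)" using IH[OF r0 fU'] by blast
    qed
    also have "\<dots> = card C * exp (- ar (r - 1) * n)" by simp
    also have "\<dots> \<le> 2^(r * card S) * exp (- ar (r - 1) * n)"
    proof (rule mult_right_mono)
      have "card C \<le> 2 ^ card (U' - U)" unfolding C_def by (rule card_keys[OF UU fU'])
      also have "\<dots> \<le> 2 ^ (r * card S)"
      proof (rule power_increasing)
        have "card (U' - U) \<le> card (g ` Sigma S J)" by (rule card_mono) (use fSJ in \<open>auto simp: U'_def\<close>)
        also have "\<dots> \<le> card (Sigma S J)" by (rule card_image_le[OF fSJ])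
        also have "\<dots> = (\<Sum>i\<in>S. card (J i))" using fS H Sn by (subst card_SigmaI) auto
        also have "\<dots> \<le> (\<Sum>i\<in>S. r)" using H Sn by (intro sum_mono) auto
        finally show "card (U' - U) \<le> r * card S" by (simp add: mult.commute)
      qed simp
      finally show "real (card C) \<le> 2^(r * card S)" by (metis of_nat_le_iff of_nat_numeral of_nat_power)
    qed simp
    also have "\<dots> \<le> exp (real (r * card S)) * exp (- ar (r - 1) * n)"
      by (rule mult_right_mono[OF pow_le_exp]) simp
    also have "\<dots> \<le> exp (r * (bt r * n)) * exp (- ar (r - 1) * n)"
      using False by (intro mult_right_mono) (auto intro!: mult_left_mono)
    also have "\<dots> = exp (r * bt r * n - ar (r - 1) * n)" by (simp add: exp_add[symmetric] algebra_simps)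
    also have "\<dots> \<le> exp (- ar r * n)"
    proof -
      obtain r' where r': "r = Suc r'" using r0 gr0_implies_Suc by blast
      have "real r * bt r + ar r \<le> ar (r - 1)" using step_ineq[of r'] r' by simp
      then have "(real r * bt r + ar r) * n \<le> ar (r - 1) * n" by (intro mult_right_mono) auto
      then show ?thesis by (simp add: algebra_simps)
    qed
    finally show ?thesis .
  qed
qed

lemma main: "finite U \<Longrightarrow> \<forall>i<n. rk_le m U c r (P i) \<Longrightarrow> Phi m U c n P \<le> exp (- ar r * n)"
proof (induction r arbitrary: U c)
  case 0 show ?case by (rule main_step[OF 0(1) 0(2)]) simp
next
  case (Suc r)
  show ?case
  proof (rule main_step[OF Suc.prems])
    fix U' c' assume "finite U'" "\<forall>i<n. rk_le m U' c' (Suc r - 1) (P i)"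
    then show "Phi m U' c' n P \<le> exp (- ar (Suc r - 1) * real n)" using Suc.IH by simp
  qed
qed



lemma rank_to_rk:
  assumes "rank1 m Q \<le> r"
  shows "rk_le m {} c r Q"
proof -
  define Lw where "Lw j x = (if j < m then x ! j else False)" for j and x :: "bool list"
  have ex: "\<exists>k. 0 < k \<and> (\<exists>(L::nat \<Rightarrow> bool list \<Rightarrow> bool) (\<Gamma>::bool list \<Rightarrow> bool).
      (\<forall>j<k. deg_le1 m (L j)) \<and> (\<forall>x \<in> vecs m. Q x = \<Gamma> (map (\<lambda>j. L j x) [0..<k])))"
  proof (intro exI conjI)
    show "0 < Suc m" by simp
    show "\<forall>j<Suc m. deg_le1 m (Lw j)"
    proof (intro allI impI)
      fix j assume "j < Suc m"
      show "deg_le1 m (Lw j)" unfolding deg_le1_def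
      proof (intro exI ballI)
        fix x :: "bool list" assume "x \<in> vecs m"
        have "(\<Sum>i<m. of_bool ((i = j) \<and> x ! i) :: nat) = (if j < m then of_bool (x ! j) else 0)"
        proof -
          have "(\<Sum>i<m. of_bool ((i = j) \<and> x ! i) :: nat) = (\<Sum>i<m. if i = j then of_bool (x ! j) else 0)"
            by (rule sum.cong) auto
          also have "\<dots> = (if j < m then of_bool (x ! j) else 0)" by (simp add: sum.delta)
          finally show ?thesis .
        qed
        then show "Lw j x = odd (of_bool False + (\<Sum>i<m. of_bool ((i = j) \<and> x ! i)) :: nat)"
          by (simp add: Lw_def)
      qed
    qed
    show "\<forall>x\<in>vecs m. Q x = (\<lambda>ys. Q (take m ys)) (map (\<lambda>j. Lw j x) [0..<Suc m])"
    proof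
      fix x :: "bool list" assume x: "x \<in> vecs m"
      then have l: "length x = m" by (simp add: vecs_def)
      have "take m (map (\<lambda>j. Lw j x) [0..<Suc m]) = map (\<lambda>j. Lw j x) [0..<m]" by simp
      also have "\<dots> = map (\<lambda>j. x ! j) [0..<m]" by (rule map_cong) (auto simp: Lw_def)
      also have "\<dots> = x" using l map_nth[of x] by simp
      finally have tk: "take m (map (\<lambda>j. Lw j x) [0..<Suc m]) = x" .
      show "Q x = (\<lambda>ys. Q (take m ys)) (map (\<lambda>j. Lw j x) [0..<Suc m])" by (simp only: tk)
    qed
  qed
  define k0 where "k0 = rank1 m Q"
  have "0 < k0 \<and> (\<exists>(L::nat \<Rightarrow> bool list \<Rightarrow> bool) (\<Gamma>::bool list \<Rightarrow> bool).
      (\<forall>j<k0. deg_le1 m (L j)) \<and> (\<forall>x \<in> vecs m. Q x = \<Gamma> (map (\<lambda>j. L j x) [0..<k0])))"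
    unfolding k0_def rank1_def by (rule LeastI_ex[OF ex])
  then obtain L :: "nat \<Rightarrow> bool list \<Rightarrow> bool" and \<Gamma> :: "bool list \<Rightarrow> bool"
    where Ld: "\<forall>j<k0. deg_le1 m (L j)" and Qx: "\<forall>x \<in> vecs m. Q x = \<Gamma> (map (\<lambda>j. L j x) [0..<k0])"
    by blast
  have "\<forall>j. \<exists>p::bool \<times> (nat \<Rightarrow> bool). j < k0 \<longrightarrow> (\<forall>x\<in>vecs m. L j x = odd (of_bool (fst p) + (\<Sum>i<m. of_bool (snd p i \<and> x ! i)) :: nat))"
  proof
    fix j show "\<exists>p::bool \<times> (nat \<Rightarrow> bool). j < k0 \<longrightarrow> (\<forall>x\<in>vecs m. L j x = odd (of_bool (fst p) + (\<Sum>i<m. of_bool (snd p i \<and> x ! i)) :: nat))"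
    proof (cases "j < k0")
      case True
      then have "deg_le1 m (L j)" using Ld by simp
      then obtain a0 :: bool and a :: "nat \<Rightarrow> bool" where
        "\<forall>x\<in>vecs m. L j x = odd (of_bool a0 + (\<Sum>i<m. of_bool (a i \<and> x ! i)) :: nat)"
        unfolding deg_le1_def by blast
      then show ?thesis by (intro exI[of _ "(a0, a)"]) simp
    qed simp
  qed
  from choice[OF this] obtain T :: "nat \<Rightarrow> bool \<times> (nat \<Rightarrow> bool)" where
    T: "\<forall>j. j < k0 \<longrightarrow> (\<forall>x\<in>vecs m. L j x = odd (of_bool (fst (T j)) + (\<Sum>i<m. of_bool (snd (T j) i \<and> x ! i)) :: nat))"
    by (rule exE)
  have Lj: "L j x = (fst (T j) \<noteq> lin m (snd (T j)) x)" if "j < k0" "x \<in> vecs m" for j x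
  proof -
    have "L j x = odd (of_bool (fst (T j)) + (\<Sum>i<m. of_bool (snd (T j) i \<and> x ! i)) :: nat)"
      using T that by blast
    then show ?thesis by (cases "fst (T j)") (simp_all add: lin_def)
  qed
  show ?thesis unfolding rk_le_def
  proof (intro exI conjI)
    show "finite {..<k0}" by simp
    show "card {..<k0} \<le> r" using assms by (simp add: k0_def)
    show "\<forall>x\<in>Aset m {} c. Q x = (\<lambda>v. \<Gamma> (map (\<lambda>j. fst (T j) \<noteq> v j) [0..<k0]))
        (\<lambda>j. if j \<in> {..<k0} then lin m (snd (T j)) x else False)"
    proof
      fix x assume "x \<in> Aset m {} c"
      then have x: "x \<in> vecs m" by (simp add: Aset_empty)
      have me: "map (\<lambda>j. L j x) [0..<k0] = map (\<lambda>j. fst (T j) \<noteq> (if j \<in> {..<k0} then lin m (snd (T j)) x else False)) [0..<k0]"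
        by (rule map_cong) (auto simp: Lj x)
      then show "Q x = (\<lambda>v. \<Gamma> (map (\<lambda>j. fst (T j) \<noteq> v j) [0..<k0]))
        (\<lambda>j. if j \<in> {..<k0} then lin m (snd (T j)) x else False)"
        using Qx x by (simp only: me[symmetric])
    qed
  qed
qed

lemma final_bound:
  assumes r: "r \<ge> 1"
  shows "exp (- ar r * real n) \<le> 2 powr (- 1 * 2 powr (- 19 * (real r)\<^sup>2) * real n)"
proof -
  have p: "2 powr (- 19 * (real r)\<^sup>2) = 1 / 2^(19 * r^2)"
  proof -
    have "- 19 * (real r)\<^sup>2 = - real (19 * r^2)" by simp
    moreover have "(2::real) powr (real (19 * r^2)) = 2^(19 * r^2)" by (rule powr_realpow) simp
    ultimately show ?thesis by (simp add: powr_minus divide_inverse)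
  qed
  have "(1::real) / 2^(19 * r^2) \<le> 1 / 2^(12 * r^2 + 7)"
  proof -
    have "12 * r^2 + 7 \<le> 19 * r^2" using r by (simp add: power2_eq_square)
    then have "(2::real)^(12 * r^2 + 7) \<le> 2^(19 * r^2)" by (rule power_increasing) simp
    then show ?thesis by (intro divide_left_mono) auto
  qed
  also have "\<dots> \<le> ar r" by (rule ar_lower)
  finally have b: "2 powr (- 19 * (real r)\<^sup>2) \<le> ar r" using p by simp
  have l2: "ln (2::real) \<le> 1" using ln_le_minus_one[of 2] by simp
  have l0: "0 \<le> ln (2::real)" by simp
  have "2 powr (- 19 * (real r)\<^sup>2) * ln 2 \<le> ar r"
    using b l2 l0 by (metis mult_left_le dual_order.trans powr_ge_zero)
  then have "2 powr (- 19 * (real r)\<^sup>2) * ln 2 * real n \<le> ar r * real n" by (intro mult_right_mono) auto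
  then have "- ar r * real n \<le> (- 1 * 2 powr (- 19 * (real r)\<^sup>2) * real n) * ln 2" by (simp add: algebra_simps)
  then have "exp (- ar r * real n) \<le> exp ((- 1 * 2 powr (- 19 * (real r)\<^sup>2) * real n) * ln 2)" by simp
  also have "\<dots> = 2 powr (- 1 * 2 powr (- 19 * (real r)\<^sup>2) * real n)" by (simp add: powr_def)
  finally show ?thesis .
qed

theorem corollary8p3:
  shows "\<exists>C c :: real. C > 0 \<and> c > 0 \<and>
    (\<forall>(r::nat) (m::nat) (n::nat) (P::nat \<Rightarrow> bool list \<Rightarrow> bool).
       r \<ge> 1 \<longrightarrow> (\<forall>i<n. rank1 m (P i) \<le> r) \<longrightarrow>
       tv_dist (vecs n) (distP m n P) ber13
         \<ge> 1 - 2 powr (- c * 2 powr (- C * (real r)\<^sup>2) * real n))"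
proof -
  have claim: "1 - 2 powr (- 1 * 2 powr (- 19 * (real r)\<^sup>2) * real n) \<le> tv_dist (vecs n) (distP m n P) ber13"
    if r: "r \<ge> 1" and rk: "\<forall>i<n. rank1 m (P i) \<le> r" for r m n :: nat and P :: "nat \<Rightarrow> bool list \<Rightarrow> bool"
  proof -
    have "\<forall>i<n. rk_le m {} (\<lambda>_. False) r (P i)" using rk rank_to_rk by blast
    then have "Phi m {} (\<lambda>_. False) n P \<le> exp (- ar r * real n)" by (intro main) auto
    then have "1 - 2 powr (- 1 * 2 powr (- 19 * (real r)\<^sup>2) * real n) \<le> 1 - Phi m {} (\<lambda>_. False) n P"
      using final_bound[OF r, of n] by linarith
    then show ?thesis by (simp add: tv_eq[of n m P "\<lambda>_. False"])
  qed
  show ?thesis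
    by (rule exI[of _ "19::real"], rule exI[of _ "1::real"]) (use claim in auto)
qed

end
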